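(* Let $V=L^2(\mathbb R)\times L^2(\mathbb R)$ (real), $\rho(x)=\{2\tanh^2(x/2)-1\}/4$, $\kappa(x)=\mathrm{sech}(x/2)$, and let $A$ be the operator $A(\phi,\psi)=(\phi''-\psi-\rho\phi,\ \psi''+\phi-\rho\psi)$ with domain $U=H^2(\mathbb R)\times H^2(\mathbb R)$; let $A_c$ be its complex-linear extension (domain $U_c$). Then (i) $A_c-i$ (from $U_c$ to $V_c$) is a Fredholm operator of index $0$; (ii) $\mathcal N(A_c-i)=\mathrm{span}\{\psi_\star\}$, where $\psi_\star=(\kappa,-i\kappa)$. *)

theory Defs
  imports "HOL-Analysis.Analysis"
begin

text \<open>V_c = L2 x L2 is represented by representatives (equality in V_c is a.e. equality);
  U_c = H2 x H2 is represented by the unique C^1 representatives.\<close>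

type_synonym cpair = "(real \<Rightarrow> complex) \<times> (real \<Rightarrow> complex)"

definition L2 :: "(real \<Rightarrow> complex) \<Rightarrow> bool" where
  "L2 f \<longleftrightarrow> f \<in> borel_measurable lebesgue \<and> integrable lebesgue (\<lambda>x. (norm (f x))^2)"

definition weak_dd :: "(real \<Rightarrow> complex) \<Rightarrow> (real \<Rightarrow> complex) \<Rightarrow> (real \<Rightarrow> complex) \<Rightarrow> bool" where
  "weak_dd f f1 f2 \<longleftrightarrow> (\<forall>x. (f has_vector_derivative f1 x) (at x)) \<and>
     (\<forall>a b. a \<le> b \<longrightarrow> (f2 has_integral (f1 b - f1 a)) {a..b})"

definition H2 :: "(real \<Rightarrow> complex) \<Rightarrow> bool" where
  "H2 f \<longleftrightarrow> L2 f \<and> (\<exists>f1 f2. weak_dd f f1 f2 \<and> L2 f1 \<and> L2 f2)"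

definition Vc :: "cpair set" where
  "Vc = {v. L2 (fst v) \<and> L2 (snd v)}"

definition Uc :: "cpair set" where
  "Uc = {u. H2 (fst u) \<and> H2 (snd u)}"

definition rho :: "real \<Rightarrow> real" where
  "rho x = (2 * (tanh (x/2))^2 - 1) / 4"

definition kappa :: "real \<Rightarrow> real" where
  "kappa x = 1 / cosh (x/2)"

text \<open>Graph of A_c - i : U_c \<rightarrow> V_c, where
  A(\<phi>,\<psi>) = (\<phi>'' - \<psi> - \<rho>\<phi>, \<psi>'' + \<phi> - \<rho>\<psi>); the image is determined up to a.e. equality.\<close>
definition Ac_minus_i :: "cpair \<Rightarrow> cpair \<Rightarrow> bool" where
  "Ac_minus_i u v \<longleftrightarrow> u \<in> Uc \<and> v \<in> Vc \<and>
     (\<exists>\<phi>1 \<phi>2 \<psi>1 \<psi>2. weak_dd (fst u) \<phi>1 \<phi>2 \<and> weak_dd (snd u) \<psi>1 \<psi>2 \<and>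
        (AE x in lebesgue.
           fst v x = \<phi>2 x - snd u x - complex_of_real (rho x) * fst u x - \<i> * fst u x \<and>
           snd v x = \<psi>2 x + fst u x - complex_of_real (rho x) * snd u x - \<i> * snd u x))"

definition zero_pair :: cpair where
  "zero_pair = (\<lambda>_. 0, \<lambda>_. 0)"

definition op_kernel :: "(cpair \<Rightarrow> cpair \<Rightarrow> bool) \<Rightarrow> cpair set" where
  "op_kernel T = {u. T u zero_pair}"

definition op_range :: "(cpair \<Rightarrow> cpair \<Rightarrow> bool) \<Rightarrow> cpair set" where
  "op_range T = {v. \<exists>u. T u v}"

definition lincomb :: "(nat \<Rightarrow> complex) \<Rightarrow> (nat \<Rightarrow> cpair) \<Rightarrow> nat \<Rightarrow> cpair" where
  "lincomb c b n = (\<lambda>x. \<Sum>j<n. c j * fst (b j) x, \<lambda>x. \<Sum>j<n. c j * snd (b j) x)"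

definition has_dim :: "cpair set \<Rightarrow> nat \<Rightarrow> bool" where
  "has_dim S n \<longleftrightarrow> (\<exists>b. (\<forall>j<n. b j \<in> S) \<and> (\<forall>u\<in>S. \<exists>c. u = lincomb c b n) \<and>
      (\<forall>c. lincomb c b n = zero_pair \<longrightarrow> (\<forall>j<n. c j = 0)))"

text \<open>R (closed under a.e. equality within V) has codimension m in V = V_c,
   i.e. dim (V / R) = m, where V is taken modulo a.e. equality\<close>
definition has_codim :: "cpair set \<Rightarrow> cpair set \<Rightarrow> nat \<Rightarrow> bool" where
  "has_codim R V m \<longleftrightarrow> (\<exists>e. (\<forall>j<m. e j \<in> V) \<and>
      (\<forall>v\<in>V. \<exists>c. \<exists>r\<in>R. AE x in lebesgue.
          fst v x = fst r x + fst (lincomb c e m) x \<and> snd v x = snd r x + snd (lincomb c e m) x) \<and>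
      (\<forall>c. lincomb c e m \<in> R \<longrightarrow> (\<forall>j<m. c j = 0)))"

definition l2dist2 :: "cpair \<Rightarrow> cpair \<Rightarrow> real" where
  "l2dist2 u v = integral\<^sup>L lebesgue
     (\<lambda>x. (norm (fst u x - fst v x))^2 + (norm (snd u x - snd v x))^2)"

definition L2_closed :: "cpair set \<Rightarrow> cpair set \<Rightarrow> bool" where
  "L2_closed R V \<longleftrightarrow> (\<forall>v\<in>V. \<forall>s. (\<forall>n. s n \<in> R) \<and> (\<lambda>n. l2dist2 (s n) v) \<longlonglongrightarrow> 0 \<longrightarrow> v \<in> R)"

definition fredholm :: "(cpair \<Rightarrow> cpair \<Rightarrow> bool) \<Rightarrow> cpair set \<Rightarrow> cpair set \<Rightarrow> bool" where
  "fredholm T U V \<longleftrightarrow> (\<forall>u v. T u v \<longrightarrow> u \<in> U \<and> v \<in> V) \<and>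
     (\<exists>n. has_dim (op_kernel T) n) \<and> L2_closed (op_range T) V \<and>
     (\<exists>m. has_codim (op_range T) V m)"

definition fredholm_index :: "(cpair \<Rightarrow> cpair \<Rightarrow> bool) \<Rightarrow> cpair set \<Rightarrow> int \<Rightarrow> bool" where
  "fredholm_index T V k \<longleftrightarrow> (\<exists>n m. has_dim (op_kernel T) n \<and> has_codim (op_range T) V m \<and>
      k = int n - int m)"

end

theory Submission
  imports Defs "HOL-Real_Asymp.Real_Asymp"
begin

section \<open>Basic facts on kappa, tanh\<close>

definition tau :: "real \<Rightarrow> real" where "tau x = tanh (x/2)"
definition kd :: "real \<Rightarrow> real" where "kd x = - tau x * kappa x / 2"

lemma cosh_half_pos: "cosh (x/2::real) > 0" by simp

lemma kappa_pos: "kappa x > 0" by (simp add: kappa_def)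

lemma kappa_le1: "kappa x \<le> 1"
  using cosh_real_ge_1[of "x/2"] by (simp add: kappa_def)

lemma half_deriv: "((\<lambda>x::real. x/2) has_real_derivative 1/2) (at x within s)"
  by (auto intro!: derivative_eq_intros)

lemma kappa_even: "kappa (-x) = kappa x" by (simp add: kappa_def)

lemma tau_kappa: "tau x ^ 2 + kappa x ^ 2 = 1"
  unfolding tau_def kappa_def
  by (smt (verit, ccfv_threshold) add_divide_distrib cosh_square_eq
    divide_self_if power_divide sum_power2_eq_zero_iff tanh_def)

lemma abs_tau_le1: "\<bar>tau x\<bar> \<le> 1"
proof -
  have "tau x ^ 2 \<le> 1" by (metis tau_kappa le_add_same_cancel1 zero_le_power2)
  then show ?thesis by (simp add: abs_square_le_1)
qed

lemma rho_tau: "rho x = (2 * tau x ^ 2 - 1) / 4" by (simp add: rho_def tau_def)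

lemma rho_bound: "\<bar>rho x\<bar> \<le> 1"
proof -
  have "tau x ^ 2 \<le> 1" by (metis tau_kappa le_add_same_cancel1 zero_le_power2)
  moreover have "0 \<le> tau x ^ 2" by simp
  ultimately have "(2 * tau x ^ 2 - 1) / 4 \<le> 1 \<and> - ((2 * tau x ^ 2 - 1) / 4) \<le> 1" by auto
  then show ?thesis unfolding rho_tau abs_le_iff by blast
qed

lemma tau_deriv: "(tau has_real_derivative (kappa x ^ 2 / 2)) (at x)"
proof -
  have d: "((\<lambda>x. tanh (x/2)) has_real_derivative (1 - tanh (x/2) ^ 2) * (1/2)) (at x)"
    by (rule has_field_derivative_tanh[OF _ half_deriv]) simp
  have e: "(1 - tanh (x/2) ^ 2) * (1/2) = kappa x ^ 2 / 2"
    using tau_kappa[of x] unfolding tau_def by simp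
  show ?thesis unfolding tau_def[abs_def] using DERIV_cong[OF d e] .
qed

lemma kappa_deriv: "(kappa has_real_derivative kd x) (at x)"
proof -
  have d: "((\<lambda>x. inverse (cosh (x/2))) has_real_derivative
      - ((sinh (x/2) * (1/2)) * inverse (cosh (x/2) ^ Suc (Suc 0)))) (at x)"
    by (rule DERIV_inverse_fun[OF has_field_derivative_cosh[OF half_deriv]]) (simp add: cosh_real_nonzero)
  have e: "- ((sinh (x/2) * (1/2)) * inverse (cosh (x/2) ^ Suc (Suc 0))) = kd x"
    unfolding kd_def tau_def kappa_def tanh_def by (simp add: field_simps power2_eq_square)
  have "kappa = (\<lambda>x. inverse (cosh (x/2)))" by (simp add: fun_eq_iff kappa_def inverse_eq_divide)
  then show ?thesis using DERIV_cong[OF d e] by simp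
qed

lemma kd_deriv: "(kd has_real_derivative rho x * kappa x) (at x)"
proof -
  have "((\<lambda>x. - tau x * kappa x / 2) has_real_derivative
     (- (kappa x ^ 2 / 2) * kappa x + kd x * - tau x) / 2) (at x)"
    by (intro DERIV_cdivide DERIV_mult DERIV_minus tau_deriv kappa_deriv)
  moreover have "(- (kappa x ^ 2 / 2) * kappa x + kd x * - tau x) / 2 = rho x * kappa x"
  proof -
    have r: "rho x = (tau x ^ 2 - kappa x ^ 2) / 4"
      using tau_kappa[of x] unfolding rho_tau by (simp add: field_simps)
    show ?thesis unfolding r kd_def by (simp add: field_simps power2_eq_square)
  qed
  ultimately show ?thesis unfolding kd_def[abs_def] by simp
qed

lemma abs_kd_le: "\<bar>kd x\<bar> \<le> kappa x"
  using abs_tau_le1[of x] kappa_pos[of x] unfolding kd_def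
  by (simp add: abs_mult)

lemma continuous_kappa: "continuous_on A kappa"
  unfolding kappa_def by (intro continuous_intros) auto
lemma continuous_tau: "continuous_on A tau"
  unfolding tau_def tanh_def by (intro continuous_intros) (auto simp: cosh_real_pos[THEN less_imp_neq, symmetric] cosh_real_nonzero)
lemma continuous_kd: "continuous_on A kd"
  unfolding kd_def by (intro continuous_intros continuous_tau continuous_kappa) auto
lemma continuous_rho: "continuous_on A rho"
  unfolding rho_tau by (intro continuous_intros continuous_tau) auto

lemma cosh_le_exp_abs: "cosh (a::real) \<le> exp \<bar>a\<bar>"
proof -
  have 1: "exp a \<le> exp \<bar>a\<bar>" and 2: "exp (-a) \<le> exp \<bar>a\<bar>" by auto
  have 3: "exp a + exp (-a) \<le> exp \<bar>a\<bar> + exp \<bar>a\<bar>" by (rule add_mono[OF 1 2])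
  show ?thesis unfolding cosh_field_def using 3 by simp
qed

lemma cosh_ge_exp_abs: "exp \<bar>a\<bar> / 2 \<le> cosh (a::real)"
proof -
  have "exp \<bar>a\<bar> = exp a \<or> exp \<bar>a\<bar> = exp (-a)" by (cases "a \<ge> 0") auto
  then show ?thesis unfolding cosh_field_def by auto
qed

lemma exp_le_kappa: "exp (- \<bar>x\<bar> / 2) \<le> kappa x"
proof -
  have "cosh (x/2) \<le> exp \<bar>x/2\<bar>" by (rule cosh_le_exp_abs)
  then show ?thesis unfolding kappa_def
    by (simp add: exp_minus field_simps)
qed

lemma kappa_ratio:
  assumes "\<bar>a\<bar> + \<bar>a - b\<bar> \<le> \<bar>b\<bar>"
  shows "cosh (a/2) / cosh (b/2) \<le> 2 * kappa (a - b)"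
proof -
  have "cosh (a/2) / cosh (b/2) \<le> exp \<bar>a/2\<bar> / (exp \<bar>b/2\<bar> / 2)"
    by (intro frac_le cosh_le_exp_abs cosh_ge_exp_abs) auto
  also have "\<dots> = 2 * exp (\<bar>a\<bar>/2 - \<bar>b\<bar>/2)" by (simp add: exp_diff)
  also have "\<dots> \<le> 2 * exp (- \<bar>a - b\<bar> / 2)" using assms by simp
  also have "\<dots> \<le> 2 * kappa (a - b)" using exp_le_kappa by simp
  finally show ?thesis .
qed

section \<open>Measure-theoretic preliminaries\<close>

lemma sigma_finite_lebesgue: "sigma_finite_measure (lebesgue :: real measure)"
proof -
  from sigma_finite_lborel obtain A :: "real set set" where A: "countable A" "A \<subseteq> sets lborel"
     "\<Union>A = space lborel" "\<forall>a\<in>A. emeasure lborel a \<noteq> \<infinity>"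
    unfolding sigma_finite_measure_def by blast
  show ?thesis unfolding sigma_finite_measure_def
    by (rule exI[of _ A]) (use A in auto)
qed

interpretation lebp: pair_sigma_finite "lebesgue :: real measure" "lebesgue :: real measure"
  by (simp add: pair_sigma_finite_def sigma_finite_lebesgue)

lemma ab_le_sq: "0 \<le> a \<Longrightarrow> 0 \<le> b \<Longrightarrow> (a::real) * b \<le> a^2 + b^2"
proof -
  assume "0 \<le> a" "0 \<le> b"
  have "0 \<le> (a - b)^2" by simp
  then have "0 \<le> a^2 + b^2 - 2*a*b" by (simp add: power2_diff)
  moreover have "0 \<le> a * b" using \<open>0 \<le> a\<close> \<open>0 \<le> b\<close> by simp
  ultimately show ?thesis by linarith
qed

lemma kappa_nonneg[simp]: "0 \<le> kappa x" using kappa_pos[of x] by simp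
lemma abs_kappa[simp]: "\<bar>kappa x\<bar> = kappa x" by simp
lemma kappa_sq_le: "kappa z * kappa z \<le> kappa z"
  using mult_left_mono[OF kappa_le1[of z] kappa_nonneg[of z]] by simp

lemma cont_meas: "continuous_on UNIV f \<Longrightarrow> f \<in> borel_measurable lebesgue"
  by (intro measurable_completion) (simp add: borel_measurable_continuous_onI)

lemma two_ab_le: "2 * (a::real) * b \<le> a^2 + b^2"
proof -
  have "0 \<le> (a - b)^2" by simp
  then show ?thesis by (simp add: power2_diff)
qed

lemma L2_measurable: "L2 f \<Longrightarrow> f \<in> borel_measurable lebesgue" by (simp add: L2_def)
lemma L2_integrable: "L2 f \<Longrightarrow> integrable lebesgue (\<lambda>x. (norm (f x))^2)" by (simp add: L2_def)

lemma L2_prod_integrable: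
  assumes "L2 f" "L2 g"
  shows "integrable lebesgue (\<lambda>x. f x * g x)"
proof (rule Bochner_Integration.integrable_bound)
  show "integrable lebesgue (\<lambda>x. (norm (f x))^2 + (norm (g x))^2)"
    using assms by (simp add: L2_def)
  show "(\<lambda>x. f x * g x) \<in> borel_measurable lebesgue"
    using assms by (auto simp: L2_def intro!: borel_measurable_times)
  show "AE x in lebesgue. norm (f x * g x) \<le> norm ((norm (f x))^2 + (norm (g x))^2)"
    by (auto simp: norm_mult intro!: ab_le_sq)
qed

lemma L2_bound:
  assumes "L2 f" "g \<in> borel_measurable lebesgue" "AE x in lebesgue. norm (g x) \<le> B * norm (f x)"
  shows "L2 g"
  unfolding L2_def
proof (intro conjI)
  show "g \<in> borel_measurable lebesgue" by fact
  show "integrable lebesgue (\<lambda>x. (norm (g x))\<^sup>2)"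
  proof (rule Bochner_Integration.integrable_bound)
    show "integrable lebesgue (\<lambda>x. B^2 * (norm (f x))^2)"
      using assms by (simp add: L2_def)
    show "(\<lambda>x. (norm (g x))\<^sup>2) \<in> borel_measurable lebesgue" using assms(2) by measurable
    show "AE x in lebesgue. norm ((norm (g x))\<^sup>2) \<le> norm (B^2 * (norm (f x))^2)"
      using assms(3)
    proof eventually_elim
      case (elim x)
      have "(norm (g x))^2 \<le> (B * norm (f x))^2"
        using elim by (intro power_mono) auto
      then show ?case by (simp add: power_mult_distrib)
    qed
  qed
qed

lemma L2_add:
  assumes "L2 f" "L2 g" shows "L2 (\<lambda>x. f x + g x)"
  unfolding L2_def
proof (intro conjI)
  show "(\<lambda>x. f x + g x) \<in> borel_measurable lebesgue" using assms by (auto simp: L2_def intro!: borel_measurable_add)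
  show "integrable lebesgue (\<lambda>x. (norm (f x + g x))\<^sup>2)"
  proof (rule Bochner_Integration.integrable_bound)
    show "integrable lebesgue (\<lambda>x. 2 * ((norm (f x))^2 + (norm (g x))^2))"
      using assms by (simp add: L2_def)
    have [measurable]: "f \<in> borel_measurable lebesgue" "g \<in> borel_measurable lebesgue"
      using assms by (auto simp: L2_def)
    show "(\<lambda>x. (norm (f x + g x))\<^sup>2) \<in> borel_measurable lebesgue"
      by measurable
    show "AE x in lebesgue. norm ((norm (f x + g x))\<^sup>2) \<le> norm (2 * ((norm (f x))^2 + (norm (g x))^2))"
    proof (rule AE_I2)
      fix x
      have "(norm (f x + g x))^2 \<le> (norm (f x) + norm (g x))^2"
        by (intro power_mono norm_triangle_ineq) auto
      also have "\<dots> \<le> 2 * ((norm (f x))^2 + (norm (g x))^2)"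
        using two_ab_le[of "norm (f x)" "norm (g x)"] by (simp add: power2_sum)
      finally show "norm ((norm (f x + g x))\<^sup>2) \<le> norm (2 * ((norm (f x))^2 + (norm (g x))^2))"
        by simp
    qed
  qed
qed

lemma L2_cmult: "L2 f \<Longrightarrow> L2 (\<lambda>x. c * f x)"
  by (rule L2_bound[where B="norm c"]) (auto simp: L2_def norm_mult)

lemma L2_uminus: "L2 f \<Longrightarrow> L2 (\<lambda>x. - f x)"
  by (rule L2_bound[where B=1]) (auto simp: L2_def)

lemma L2_diff: "L2 f \<Longrightarrow> L2 g \<Longrightarrow> L2 (\<lambda>x. f x - g x)"
  using L2_add[of f "\<lambda>x. - g x"] L2_uminus[of g] by simp

lemma L2_mult_bounded:
  assumes "L2 f" "g \<in> borel_measurable lebesgue" "\<And>x. norm (g x) \<le> B"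
  shows "L2 (\<lambda>x. g x * f x)"
proof (rule L2_bound[where B=B])
  show "(\<lambda>x. g x * f x) \<in> borel_measurable lebesgue" using assms by (auto simp: L2_def intro!: borel_measurable_times)
  show "AE x in lebesgue. norm (g x * f x) \<le> B * norm (f x)"
    using assms(3) by (auto simp: norm_mult intro!: mult_right_mono)
qed fact

lemma L2_zero: "L2 (\<lambda>x. 0)" by (simp add: L2_def)

section \<open>Integrability of kappa\<close>

lemma kappa_FTC_deriv:
  "((\<lambda>x. 2 * arctan (sinh (x/2))) has_real_derivative kappa x) (at x)"
proof -
  have d: "((\<lambda>x. 2 * arctan (sinh (x/2))) has_real_derivative
     2 * (inverse (1 + (sinh (x/2))\<^sup>2) * (cosh (x/2) * (1/2)))) (at x)"
    by (intro DERIV_cmult DERIV_chain2[OF DERIV_arctan] has_field_derivative_sinh[OF half_deriv])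
  have e: "2 * (inverse (1 + (sinh (x/2))\<^sup>2) * (cosh (x/2) * (1/2))) = kappa x"
  proof -
    have cs: "1 + (sinh (x/2))\<^sup>2 = (cosh (x/2))\<^sup>2" using cosh_square_eq[of "x/2::real"] by simp
    show ?thesis unfolding kappa_def cs by (simp add: field_simps power2_eq_square)
  qed
  show ?thesis using DERIV_cong[OF d e] .
qed

lemma borel_kappa[measurable]: "kappa \<in> borel_measurable borel"
  using continuous_kappa by (rule borel_measurable_continuous_onI)

lemma nn_kappa_right: "(\<integral>\<^sup>+x. ennreal (kappa x) * indicator {0..} x \<partial>lborel) = pi"
proof -
  have "(\<integral>\<^sup>+x. ennreal (kappa x) * indicator {0..} x \<partial>lborel) =
      pi - (\<lambda>x. 2 * arctan (sinh (x/2))) 0"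
    by (rule nn_integral_FTC_atLeast[OF borel_kappa kappa_FTC_deriv])
       (auto intro: less_imp_le[OF kappa_pos], real_asymp)
  then show ?thesis by simp
qed

lemma nn_kappa_left: "(\<integral>\<^sup>+x. ennreal (kappa x) * indicator {..0} x \<partial>lborel) = pi"
proof -
  have "(\<integral>\<^sup>+x. ennreal (kappa x) * indicator {0..} x \<partial>lborel) =
     (\<integral>\<^sup>+x. ennreal (kappa (0 + -1 * x)) * indicator {0..} (0 + -1 * x) \<partial>lborel)"
    using nn_integral_real_affine[of "\<lambda>x. ennreal (kappa x) * indicator {0..} x" "-1" 0] by simp
  also have "(\<lambda>x. ennreal (kappa (0 + -1 * x)) * indicator {0..} (0 + -1 * x)) =
      (\<lambda>x. ennreal (kappa x) * indicator {..0} x)"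
    by (auto simp: fun_eq_iff kappa_even indicator_def)
  finally show ?thesis using nn_kappa_right by simp
qed

lemma nn_kappa_finite: "(\<integral>\<^sup>+x. ennreal (kappa x) \<partial>lborel) < \<infinity>"
proof -
  have "(\<integral>\<^sup>+x. ennreal (kappa x) \<partial>lborel) \<le>
     (\<integral>\<^sup>+x. ennreal (kappa x) * indicator {0..} x + ennreal (kappa x) * indicator {..0} x \<partial>lborel)"
    by (intro nn_integral_mono) (auto simp: indicator_def)
  also have "\<dots> = ennreal pi + ennreal pi"
    by (subst nn_integral_add) (auto simp: nn_kappa_right nn_kappa_left)
  also have "\<dots> = ennreal (pi + pi)" by (rule ennreal_plus[symmetric]) auto
  also have "\<dots> < \<infinity>" by simp
  finally show ?thesis .
qed

lemma integrable_kappa_lborel: "integrable lborel kappa"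
  by (rule integrableI_bounded) (use nn_kappa_finite in auto)

lemma integrable_kappa: "integrable lebesgue kappa"
  using integrable_kappa_lborel by (simp add: integrable_completion)

lemma kappa_shift_nn: "(\<integral>\<^sup>+x. ennreal (kappa (x - y)) \<partial>lborel) = (\<integral>\<^sup>+x. ennreal (kappa x) \<partial>lborel)"
proof -
  have "(\<integral>\<^sup>+x. ennreal (kappa x) \<partial>lborel) = (\<integral>\<^sup>+x. ennreal (kappa (-y + 1 * x)) \<partial>lborel)"
    using nn_integral_real_affine[of "\<lambda>x. ennreal (kappa x)" 1 "-y"] by simp
  then show ?thesis by simp
qed

definition kc :: "real \<Rightarrow> complex" where "kc x = complex_of_real (kappa x)"

lemma L2_kc: "L2 kc"
proof -
  have "integrable lebesgue (\<lambda>x. (norm (kc x))^2)"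
  proof (rule Bochner_Integration.integrable_bound[OF integrable_kappa])
    show "(\<lambda>x. (norm (kc x))\<^sup>2) \<in> borel_measurable lebesgue" unfolding kc_def
      by (intro cont_meas continuous_intros continuous_kappa)
    show "AE x in lebesgue. norm ((norm (kc x))\<^sup>2) \<le> norm (kappa x)"
      by (auto simp: kc_def power2_eq_square kappa_sq_le intro!: AE_I2)
  qed
  moreover have "kc \<in> borel_measurable lebesgue" unfolding kc_def
      by (intro cont_meas continuous_intros continuous_kappa)
  ultimately show ?thesis unfolding L2_def by auto
qed

lemma L2_kappa_shift: "L2 (\<lambda>y. complex_of_real (kappa (x - y)))"
proof -
  have "integrable lborel (\<lambda>y. kappa (x - y))"
    using lborel_integrable_real_affine[OF integrable_kappa_lborel, of "-1" x] by simp
  then have i: "integrable lebesgue (\<lambda>y. kappa (x - y))"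
    by (simp add: integrable_completion)
  have "integrable lebesgue (\<lambda>y. (norm (complex_of_real (kappa (x - y))))^2)"
  proof (rule Bochner_Integration.integrable_bound[OF i])
    show "AE y in lebesgue. norm ((norm (complex_of_real (kappa (x - y))))\<^sup>2) \<le> norm (kappa (x - y))"
      by (auto simp: power2_eq_square kappa_sq_le intro!: AE_I2)
  qed (unfold kappa_def, intro cont_meas continuous_intros, auto)
  moreover have "(\<lambda>y. complex_of_real (kappa (x - y))) \<in> borel_measurable lebesgue"
    unfolding kappa_def by (intro cont_meas continuous_intros) auto
  ultimately show ?thesis unfolding L2_def by auto
qed

lemma ennreal_sqrt_sq: "0 \<le> a \<Longrightarrow> (ennreal (sqrt a))^2 = ennreal a"
  by (subst ennreal_power) auto

lemma schur_L2:
  fixes F h :: "real \<Rightarrow> complex" and C :: real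
  assumes h: "L2 h" and Fm: "F \<in> borel_measurable lebesgue" and C: "0 \<le> C"
    and bnd: "\<And>x. ennreal (norm (F x)) \<le> (\<integral>\<^sup>+y. ennreal (C * kappa (x - y) * norm (h y)) \<partial>lebesgue)"
  shows "L2 F"
proof -
  have [measurable]: "h \<in> borel_measurable lebesgue" using h by (simp add: L2_def)
  have hm: "(\<lambda>y. ennreal (norm (h y))) \<in> borel_measurable (completion lborel)"
    by measurable
  obtain H where Hm[measurable]: "H \<in> borel_measurable lborel"
    and HAE: "AE y in lborel. ennreal (norm (h y)) = H y"
    using completion_ex_borel_measurable[OF hm] by blast
  define K where "K = (\<integral>\<^sup>+x. ennreal (kappa x) \<partial>lborel)"
  have Kfin: "K < \<infinity>" using nn_kappa_finite K_def by simp
  define G where "G x = (\<integral>\<^sup>+y. ennreal (C * kappa (x - y)) * H y \<partial>lborel)" for x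
  have G_eq: "(\<integral>\<^sup>+y. ennreal (C * kappa (x - y) * norm (h y)) \<partial>lebesgue) = G x" for x
  proof -
    have "(\<integral>\<^sup>+y. ennreal (C * kappa (x - y) * norm (h y)) \<partial>lebesgue)
        = (\<integral>\<^sup>+y. ennreal (C * kappa (x - y) * norm (h y)) \<partial>lborel)"
      by (rule nn_integral_completion)
    also have "\<dots> = G x" unfolding G_def
    proof (rule nn_integral_cong_AE)
      show "AE y in lborel. ennreal (C * kappa (x - y) * norm (h y)) = ennreal (C * kappa (x - y)) * H y"
        using HAE by eventually_elim (simp add: ennreal_mult C)
    qed
    finally show ?thesis .
  qed
  have Gm[measurable]: "G \<in> borel_measurable lborel"
    unfolding G_def by measurable
  have shift: "(\<integral>\<^sup>+y. ennreal (C * kappa (x - y)) \<partial>lborel) = ennreal C * K" for x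
  proof -
    have "(\<integral>\<^sup>+y. ennreal (C * kappa (x - y)) \<partial>lborel) = (\<integral>\<^sup>+y. ennreal C * ennreal (kappa (x - y)) \<partial>lborel)"
      by (simp add: ennreal_mult C)
    also have "\<dots> = ennreal C * (\<integral>\<^sup>+y. ennreal (kappa (x - y)) \<partial>lborel)"
      by (rule nn_integral_cmult) measurable
    also have "(\<integral>\<^sup>+y. ennreal (kappa (x - y)) \<partial>lborel) = K"
    proof -
      have "(\<integral>\<^sup>+y. ennreal (kappa (x - y)) \<partial>lborel) = (\<integral>\<^sup>+y. ennreal (kappa (y - x)) \<partial>lborel)"
        by (metis (no_types, lifting) kappa_even minus_diff_eq)
      then show ?thesis using kappa_shift_nn[of x] K_def by simp
    qed
    finally show ?thesis .
  qed
  have CS: "(G x)^2 \<le> ennreal C * K * (\<integral>\<^sup>+y. ennreal (C * kappa (x - y)) * (H y)^2 \<partial>lborel)" for x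
  proof -
    have "(G x)^2 = (\<integral>\<^sup>+y. ennreal (sqrt (C * kappa (x - y))) * (ennreal (sqrt (C * kappa (x - y))) * H y) \<partial>lborel)^2"
      unfolding G_def
    proof (intro arg_cong[where f="\<lambda>a. a^2"] nn_integral_cong)
      fix y
      have "ennreal (sqrt (C * kappa (x - y))) * ennreal (sqrt (C * kappa (x - y))) = ennreal (C * kappa (x - y))"
        using ennreal_sqrt_sq[of "C * kappa (x - y)"] C by (simp add: power2_eq_square)
      then show "ennreal (C * kappa (x - y)) * H y = ennreal (sqrt (C * kappa (x - y))) * (ennreal (sqrt (C * kappa (x - y))) * H y)"
        by (simp add: mult.assoc[symmetric])
    qed
    also have "\<dots> \<le> (\<integral>\<^sup>+y. (ennreal (sqrt (C * kappa (x - y))))^2 \<partial>lborel) *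
        (\<integral>\<^sup>+y. (ennreal (sqrt (C * kappa (x - y))) * H y)^2 \<partial>lborel)"
      by (rule Cauchy_Schwarz_nn_integral) measurable
    also have "(\<integral>\<^sup>+y. (ennreal (sqrt (C * kappa (x - y))))^2 \<partial>lborel) = ennreal C * K"
      using shift[of x] C by (simp add: ennreal_sqrt_sq)
    also have "(\<integral>\<^sup>+y. (ennreal (sqrt (C * kappa (x - y))) * H y)^2 \<partial>lborel)
       = (\<integral>\<^sup>+y. ennreal (C * kappa (x - y)) * (H y)^2 \<partial>lborel)"
      using C by (simp add: power_mult_distrib ennreal_sqrt_sq)
    finally show ?thesis .
  qed
  have hfin: "(\<integral>\<^sup>+y. (H y)^2 \<partial>lborel) < \<infinity>"
  proof -
    from HAE have "AE y in lborel. (H y)^2 = ennreal (norm ((norm (h y))^2))"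
    proof eventually_elim
      case (elim y)
      have "(H y)^2 = (ennreal (norm (h y)))^2" using elim by simp
      also have "\<dots> = ennreal ((norm (h y))^2)" by (rule ennreal_power) simp
      finally show ?case by simp
    qed
    then have "(\<integral>\<^sup>+y. (H y)^2 \<partial>lborel) = (\<integral>\<^sup>+y. ennreal (norm ((norm (h y))^2)) \<partial>lborel)"
      by (rule nn_integral_cong_AE)
    also have "\<dots> = (\<integral>\<^sup>+y. ennreal (norm ((norm (h y))^2)) \<partial>lebesgue)"
      by (rule nn_integral_completion[symmetric])
    also have "\<dots> < \<infinity>" using integrableD(2)[OF L2_integrable[OF h]] by (simp add: less_top)
    finally show ?thesis .
  qed
  have "(\<integral>\<^sup>+x. ennreal (norm ((norm (F x))^2)) \<partial>lebesgue) \<le> (\<integral>\<^sup>+x. (G x)^2 \<partial>lebesgue)"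
  proof (rule nn_integral_mono)
    fix x
    have "ennreal (norm (F x)) \<le> G x" using bnd[of x] G_eq[of x] by simp
    then have "(ennreal (norm (F x)))^2 \<le> (G x)^2" by (rule power_mono) simp
    then show "ennreal (norm ((norm (F x))^2)) \<le> (G x)^2" by (simp add: ennreal_power)
  qed
  also have "\<dots> = (\<integral>\<^sup>+x. (G x)^2 \<partial>lborel)" by (rule nn_integral_completion)
  also have "\<dots> \<le> (\<integral>\<^sup>+x. ennreal C * K * (\<integral>\<^sup>+y. ennreal (C * kappa (x - y)) * (H y)^2 \<partial>lborel) \<partial>lborel)"
    by (rule nn_integral_mono) (rule CS)
  also have "\<dots> = ennreal C * K * (\<integral>\<^sup>+x. (\<integral>\<^sup>+y. ennreal (C * kappa (x - y)) * (H y)^2 \<partial>lborel) \<partial>lborel)"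
    by (rule nn_integral_cmult) measurable
  also have "(\<integral>\<^sup>+x. (\<integral>\<^sup>+y. ennreal (C * kappa (x - y)) * (H y)^2 \<partial>lborel) \<partial>lborel)
      = (\<integral>\<^sup>+y. (\<integral>\<^sup>+x. ennreal (C * kappa (x - y)) * (H y)^2 \<partial>lborel) \<partial>lborel)"
    by (rule lborel_pair.Fubini'[symmetric]) measurable
  also have "\<dots> = (\<integral>\<^sup>+y. ennreal C * K * (H y)^2 \<partial>lborel)"
  proof (rule nn_integral_cong)
    fix y
    have "(\<integral>\<^sup>+x. ennreal (C * kappa (x - y)) * (H y)^2 \<partial>lborel) =
        (\<integral>\<^sup>+x. ennreal (C * kappa (x - y)) \<partial>lborel) * (H y)^2"
      by (rule nn_integral_multc) measurable
    also have "(\<integral>\<^sup>+x. ennreal (C * kappa (x - y)) \<partial>lborel) = ennreal C * K"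
    proof -
      have "(\<integral>\<^sup>+x. ennreal (C * kappa (x - y)) \<partial>lborel) = (\<integral>\<^sup>+x. ennreal (C * kappa (y - x)) \<partial>lborel)"
        by (metis (no_types, lifting) kappa_even minus_diff_eq)
      then show ?thesis using shift[of y] by simp
    qed
    finally show "(\<integral>\<^sup>+x. ennreal (C * kappa (x - y)) * (H y)^2 \<partial>lborel) = ennreal C * K * (H y)^2" .
  qed
  also have "\<dots> = ennreal C * K * (\<integral>\<^sup>+y. (H y)^2 \<partial>lborel)"
    by (rule nn_integral_cmult) measurable
  finally have fin: "(\<integral>\<^sup>+x. ennreal (norm ((norm (F x))^2)) \<partial>lebesgue) \<le>
      ennreal C * K * (ennreal C * K * (\<integral>\<^sup>+y. (H y)^2 \<partial>lborel))" .
  also have "\<dots> < \<infinity>" using Kfin hfin by (simp add: ennreal_mult_less_top)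
  finally have "integrable lebesgue (\<lambda>x. (norm (F x))^2)"
    by (intro integrableI_bounded) (use Fm in measurable)
  then show ?thesis unfolding L2_def using Fm by simp
qed

definition prim :: "(real \<Rightarrow> complex) \<Rightarrow> (real \<Rightarrow> complex) \<Rightarrow> bool" where
  "prim f F \<longleftrightarrow> (\<forall>a b. a \<le> b \<longrightarrow> (f has_integral (F b - F a)) {a..b})"

lemma primD: "prim f F \<Longrightarrow> a \<le> b \<Longrightarrow> (f has_integral (F b - F a)) {a..b}"
  by (simp add: prim_def)

lemma prim_add: "prim f F \<Longrightarrow> prim g G \<Longrightarrow> prim (\<lambda>x. f x + g x) (\<lambda>x. F x + G x)"
  unfolding prim_def
proof (intro allI impI)
  fix a b :: real assume *: "\<forall>a b. a \<le> b \<longrightarrow> (f has_integral F b - F a) {a..b}"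
    "\<forall>a b. a \<le> b \<longrightarrow> (g has_integral G b - G a) {a..b}" "a \<le> b"
  have "((\<lambda>x. f x + g x) has_integral (F b - F a) + (G b - G a)) {a..b}"
    using * by (intro has_integral_add) auto
  then show "((\<lambda>x. f x + g x) has_integral F b + G b - (F a + G a)) {a..b}"
    by (simp add: algebra_simps)
qed

lemma prim_diff: "prim f F \<Longrightarrow> prim g G \<Longrightarrow> prim (\<lambda>x. f x - g x) (\<lambda>x. F x - G x)"
  unfolding prim_def
proof (intro allI impI)
  fix a b :: real assume *: "\<forall>a b. a \<le> b \<longrightarrow> (f has_integral F b - F a) {a..b}"
    "\<forall>a b. a \<le> b \<longrightarrow> (g has_integral G b - G a) {a..b}" "a \<le> b"
  have "((\<lambda>x. f x - g x) has_integral (F b - F a) - (G b - G a)) {a..b}"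
    using * by (intro has_integral_diff) auto
  then show "((\<lambda>x. f x - g x) has_integral F b - G b - (F a - G a)) {a..b}"
    by (simp add: algebra_simps)
qed

lemma prim_cmult: "prim f F \<Longrightarrow> prim (\<lambda>x. c * f x) (\<lambda>x. c * F x)"
  unfolding prim_def
proof (intro allI impI)
  fix a b :: real assume *: "\<forall>a b. a \<le> b \<longrightarrow> (f has_integral F b - F a) {a..b}" "a \<le> b"
  have "((\<lambda>x. c * f x) has_integral c * (F b - F a)) {a..b}"
    using * by (intro has_integral_mult_right) auto
  then show "((\<lambda>x. c * f x) has_integral c * F b - c * F a) {a..b}"
    by (simp add: algebra_simps)
qed

lemma prim_cong: "prim f F \<Longrightarrow> (\<And>x. f x = g x) \<Longrightarrow> (\<And>x. F x = G x) \<Longrightarrow> prim g G"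
  unfolding prim_def by (metis ext)

lemma prim_ae_cong:
  assumes "prim f F" "AE x in lebesgue. f x = g x"
  shows "prim g F"
proof -
  obtain N where N: "\<And>x. x \<in> space lebesgue - N \<Longrightarrow> f x = g x" "N \<in> null_sets lebesgue"
    using AE_E3[OF assms(2)] by blast
  have "negligible N" using N(2) by (simp add: negligible_iff_null_sets)
  show ?thesis unfolding prim_def
  proof (intro allI impI)
    fix a b :: real assume "a \<le> b"
    show "(g has_integral (F b - F a)) {a..b}"
      by (rule has_integral_spike[OF \<open>negligible N\<close> _ primD[OF assms(1) \<open>a \<le> b\<close>]]) (use N in auto)
  qed
qed

lemma prim_FTC:
  assumes "\<And>x. (F has_vector_derivative f x) (at x)"
  shows "prim f F"
  unfolding prim_def
proof (intro allI impI)
  fix a b :: real assume "a \<le> b"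
  show "(f has_integral (F b - F a)) {a..b}"
    by (rule fundamental_theorem_of_calculus[OF \<open>a \<le> b\<close>])
       (use assms in \<open>auto intro: has_vector_derivative_at_within\<close>)
qed

lemma prim_deriv:
  assumes F: "prim f F" and fc: "continuous_on UNIV f"
  shows "(F has_vector_derivative f x) (at x)"
proof -
  let ?S = "{x - 1..x + 1}"
  have "((\<lambda>u. integral {x - 1..u} f) has_vector_derivative f x) (at x within ?S)"
    by (rule integral_has_vector_derivative) (auto intro: continuous_on_subset[OF fc])
  then have d: "((\<lambda>u. F (x - 1) + integral {x - 1..u} f) has_vector_derivative f x) (at x within ?S)"
    by (auto intro!: derivative_eq_intros)
  have eqF: "F u = F (x - 1) + integral {x - 1..u} f" if "u \<in> ?S" for u
    using primD[OF F, of "x - 1" u] that by (simp add: integral_unique)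
  have "(F has_vector_derivative f x) (at x within ?S)"
    by (rule has_vector_derivative_transform[OF _ eqF d]) simp_all
  moreover have "at x within ?S = at x"
    by (rule at_within_interior) (simp add: interior_atLeastAtMost_real)
  ultimately show ?thesis by (simp only:)
qed

lemma prim_continuous:
  assumes F: "prim f F" and fi: "\<And>a b. f integrable_on {a..b}"
  shows "continuous_on UNIV F"
proof -
  have "isCont F x" for x
  proof -
    let ?S = "{x - 1..x + 1}"
    have "continuous_on ?S (\<lambda>u. integral {x - 1..u} f)"
      by (rule indefinite_integral_continuous_1[OF fi])
    then have c: "continuous_on ?S (\<lambda>u. F (x - 1) + integral {x - 1..u} f)"
      by (intro continuous_intros)
    have eq: "F (x - 1) + integral {x - 1..u} f = F u" if "u \<in> ?S" for u
      using primD[OF F, of "x - 1" u] that by (simp add: integral_unique)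
    have "continuous_on ?S F" by (rule continuous_on_eq[OF c eq])
    moreover have "x \<in> interior ?S" by (simp add: interior_atLeastAtMost_real)
    ultimately show ?thesis
      by (rule continuous_on_interior)
  qed
  then show ?thesis by (simp add: continuous_on_eq_continuous_at)
qed

lemma id_leb_meas[measurable]: "(\<lambda>x::real. x) \<in> borel_measurable lebesgue"
  by (rule cont_meas[OF continuous_on_id])

lemma set_lint_complex: "(LINT y:S|M. f y) = (\<integral>y. indicator S y * f y \<partial>M)" for f :: "_ \<Rightarrow> complex"
  unfolding set_lebesgue_integral_def by (intro Bochner_Integration.integral_cong) (auto simp: indicator_def)

lemma set_integrable_complex: "set_integrable M S f \<longleftrightarrow> integrable M (\<lambda>y. indicator S y * f y)" for f :: "_ \<Rightarrow> complex"
  unfolding set_integrable_def by (intro Bochner_Integration.integrable_cong) (auto simp: indicator_def)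

lemma has_integral_set_complex:
  fixes f :: "real \<Rightarrow> complex"
  assumes "set_integrable lebesgue S f"
  shows "(f has_integral (\<integral>y. indicator S y * f y \<partial>lebesgue)) S"
  using has_integral_set_lebesgue[OF assms] by (simp add: set_lint_complex)

lemma vd_continuous:
  assumes "\<And>x. (r has_vector_derivative r' x) (at x)"
  shows "continuous_on UNIV r"
  unfolding continuous_on_eq_continuous_at[OF open_UNIV]
  using assms has_vector_derivative_continuous by blast

lemma cont_bounded_Icc:
  fixes r :: "real \<Rightarrow> complex"
  assumes "continuous_on UNIV r"
  obtains B where "B > 0" "\<And>x. x \<in> {a..b} \<Longrightarrow> norm (r x) \<le> B"
proof -
  have "compact (r ` {a..b})"
    by (rule compact_continuous_image[OF continuous_on_subset[OF assms]]) auto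
  then have "bounded (r ` {a..b})" by (rule compact_imp_bounded)
  then show ?thesis using that by (auto simp: bounded_pos)
qed

lemma cont_set_integrable:
  fixes r :: "real \<Rightarrow> complex"
  assumes "continuous_on UNIV r"
  shows "set_integrable lebesgue {a..b} r"
  by (rule absolutely_integrable_continuous_real[OF continuous_on_subset[OF assms]]) auto

lemma prim_ibp:
  fixes f F r r' :: "real \<Rightarrow> complex"
  assumes F: "prim f F" and fi: "\<And>a b. set_integrable lebesgue {a..b} f"
    and fm: "f \<in> borel_measurable lebesgue"
    and r: "\<And>x. (r has_vector_derivative r' x) (at x)" and r'c: "continuous_on UNIV r'"
  shows "prim (\<lambda>x. r' x * F x + r x * f x) (\<lambda>x. r x * F x)"
  unfolding prim_def
proof (intro allI impI)
  fix a b :: real assume ab: "a \<le> b"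
  have [measurable]: "f \<in> borel_measurable lebesgue" by (rule fm)
  have r'm[measurable]: "r' \<in> borel_measurable lebesgue" by (rule cont_meas[OF r'c])
  have rc: "continuous_on UNIV r" by (rule vd_continuous[OF r])
  have rm[measurable]: "r \<in> borel_measurable lebesgue" by (rule cont_meas[OF rc])
  define F0 where "F0 x = (\<integral>y. indicator {a..x} y * f y \<partial>lebesgue)" for x
  have F0_hi: "(f has_integral F0 x) {a..x}" for x
    unfolding F0_def by (rule has_integral_set_complex[OF fi])
  have FF0: "F x = F a + F0 x" if "x \<in> {a..b}" for x
  proof -
    have "F x - F a = F0 x" using has_integral_unique[OF primD[OF F, of a x] F0_hi[of x]] that by simp
    then show ?thesis by (simp add: algebra_simps)
  qed
  obtain B where B: "B > 0" "\<And>x. x \<in> {a..b} \<Longrightarrow> norm (r' x) \<le> B"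
    using cont_bounded_Icc[OF r'c] by blast
  define G where "G = (\<lambda>x y. indicator {a..b} x * indicator {a..x} y * (r' x * f y) :: complex)"
  have mfst[measurable]: "(\<lambda>z::real\<times>real. fst z) \<in> borel_measurable (lebesgue \<Otimes>\<^sub>M lebesgue)"
    by (rule measurable_compose[OF measurable_fst cont_meas[OF continuous_on_id]])
  have msnd[measurable]: "(\<lambda>z::real\<times>real. snd z) \<in> borel_measurable (lebesgue \<Otimes>\<^sub>M lebesgue)"
    by (rule measurable_compose[OF measurable_snd cont_meas[OF continuous_on_id]])
  have mr'[measurable]: "(\<lambda>z::real\<times>real. r' (fst z)) \<in> borel_measurable (lebesgue \<Otimes>\<^sub>M lebesgue)"
    by (rule measurable_compose[OF measurable_fst r'm])
  have mf[measurable]: "(\<lambda>z::real\<times>real. f (snd z)) \<in> borel_measurable (lebesgue \<Otimes>\<^sub>M lebesgue)"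
    by (rule measurable_compose[OF measurable_snd fm])
  have Geq: "case_prod G = (\<lambda>z. (if a \<le> fst z \<and> fst z \<le> b then 1 else 0) *
      (if a \<le> snd z \<and> snd z \<le> fst z then 1 else 0) * (r' (fst z) * f (snd z)))"
    unfolding G_def by (auto simp: fun_eq_iff indicator_def)
  have Gm: "case_prod G \<in> borel_measurable (lebesgue \<Otimes>\<^sub>M lebesgue)"
    unfolding Geq by measurable
  have Gint: "integrable (lebesgue \<Otimes>\<^sub>M lebesgue) (case_prod G)"
  proof (rule integrableI_bounded[OF Gm])
    have "(\<integral>\<^sup>+z. ennreal (norm (case_prod G z)) \<partial>(lebesgue \<Otimes>\<^sub>M lebesgue)) \<le>
       (\<integral>\<^sup>+z. ennreal (B * indicator {a..b} (fst z)) * ennreal (indicator {a..b} (snd z) * norm (f (snd z))) \<partial>(lebesgue \<Otimes>\<^sub>M lebesgue))"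
    proof (rule nn_integral_mono)
      fix z :: "real \<times> real"
      obtain x y where z: "z = (x, y)" by (cases z)
      have "norm (G x y) \<le> (B * indicator {a..b} x) * (indicator {a..b} y * norm (f y))"
      proof (cases "x \<in> {a..b} \<and> y \<in> {a..x}")
        case True
        then show ?thesis unfolding G_def using B(2)[of x]
          by (auto simp: norm_mult indicator_def intro!: mult_right_mono)
      qed (use B(1) in \<open>auto simp: G_def indicator_def\<close>)
      then show "ennreal (norm (case_prod G z)) \<le> ennreal (B * indicator {a..b} (fst z)) * ennreal (indicator {a..b} (snd z) * norm (f (snd z)))"
        using B(1) by (simp add: z ennreal_mult[symmetric])
    qed
    also have "\<dots> = (\<integral>\<^sup>+x. (\<integral>\<^sup>+y. ennreal (B * indicator {a..b} x) * ennreal (indicator {a..b} y * norm (f y)) \<partial>lebesgue) \<partial>lebesgue)"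
    proof -
      have m: "(\<lambda>z::real\<times>real. ennreal (B * indicator {a..b} (fst z)) * ennreal (indicator {a..b} (snd z) * norm (f (snd z))))
          \<in> borel_measurable (lebesgue \<Otimes>\<^sub>M lebesgue)" by measurable
      show ?thesis using sigma_finite_measure.nn_integral_fst[OF sigma_finite_lebesgue m] by simp
    qed
    also have "\<dots> = (\<integral>\<^sup>+x. ennreal (B * indicator {a..b} x) * (\<integral>\<^sup>+y. ennreal (indicator {a..b} y * norm (f y)) \<partial>lebesgue) \<partial>lebesgue)"
      by (intro nn_integral_cong nn_integral_cmult) measurable
    also have "\<dots> = (\<integral>\<^sup>+x. ennreal (B * indicator {a..b} x) \<partial>lebesgue) * (\<integral>\<^sup>+y. ennreal (indicator {a..b} y * norm (f y)) \<partial>lebesgue)"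
      by (rule nn_integral_multc) measurable
    also have "\<dots> < \<infinity>"
    proof -
      have "(\<integral>\<^sup>+x. ennreal (B * indicator {a..b} x) \<partial>lebesgue) = (\<integral>\<^sup>+x. ennreal B * indicator {a..b} x \<partial>lebesgue)"
        using B(1) by (intro nn_integral_cong) (auto simp: indicator_def)
      also have "\<dots> = ennreal B * emeasure lebesgue {a..b}"
        by (rule nn_integral_cmult_indicator) simp
      also have "\<dots> < \<infinity>" using ab by (simp add: ennreal_mult_less_top)
      finally have 1: "(\<integral>\<^sup>+x. ennreal (B * indicator {a..b} x) \<partial>lebesgue) < \<infinity>" .
      have "integrable lebesgue (\<lambda>y. indicator {a..b} y *\<^sub>R f y)" using fi[of a b] by (simp add: set_integrable_def)
      then have "(\<integral>\<^sup>+y. ennreal (norm (indicator {a..b} y *\<^sub>R f y)) \<partial>lebesgue) < \<infinity>"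
        by (simp add: integrable_iff_bounded)
      moreover have "(\<lambda>y. ennreal (norm (indicator {a..b} y *\<^sub>R f y))) = (\<lambda>y. ennreal (indicator {a..b} y * norm (f y)))"
        by (auto simp: indicator_def fun_eq_iff)
      ultimately have 2: "(\<integral>\<^sup>+y. ennreal (indicator {a..b} y * norm (f y)) \<partial>lebesgue) < \<infinity>" by simp
      show ?thesis using 1 2 by (simp add: ennreal_mult_less_top)
    qed
    finally show "(\<integral>\<^sup>+z. ennreal (norm (case_prod G z)) \<partial>(lebesgue \<Otimes>\<^sub>M lebesgue)) < \<infinity>" .
  qed
  have inner_y: "(\<integral>y. G x y \<partial>lebesgue) = indicator {a..b} x * (r' x * F0 x)" for x
  proof -
    have "(\<integral>y. G x y \<partial>lebesgue) = (\<integral>y. (indicator {a..b} x * r' x) * (indicator {a..x} y * f y) \<partial>lebesgue)"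
      unfolding G_def by (intro Bochner_Integration.integral_cong) (auto simp: algebra_simps)
    also have "\<dots> = indicator {a..b} x * r' x * F0 x" unfolding F0_def by simp
    finally show ?thesis by (simp add: algebra_simps)
  qed
  have rint: "(\<integral>x. indicator {y..b} x * r' x \<partial>lebesgue) = r b - r y" if "y \<le> b" for y
  proof -
    have "(r' has_integral (r b - r y)) {y..b}" by (rule primD[OF prim_FTC[OF r] that])
    moreover have "(r' has_integral (\<integral>x. indicator {y..b} x * r' x \<partial>lebesgue)) {y..b}"
      by (rule has_integral_set_complex[OF cont_set_integrable[OF r'c]])
    ultimately show ?thesis using has_integral_unique by metis
  qed
  have inner_x: "(\<integral>x. G x y \<partial>lebesgue) = indicator {a..b} y * (f y * (r b - r y))" for y
  proof (cases "y \<in> {a..b}")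
    case True
    have "(\<integral>x. G x y \<partial>lebesgue) = (\<integral>x. f y * (indicator {y..b} x * r' x) \<partial>lebesgue)"
      unfolding G_def using True by (intro Bochner_Integration.integral_cong) (auto simp: indicator_def)
    also have "\<dots> = f y * (r b - r y)" using True by (simp add: rint)
    finally show ?thesis using True by simp
  next
    case False
    then have "G x y = 0" for x unfolding G_def by (auto simp: indicator_def)
    then show ?thesis using False by simp
  qed
  have fub: "(\<integral>y. (\<integral>x. G x y \<partial>lebesgue) \<partial>lebesgue) = (\<integral>x. (\<integral>y. G x y \<partial>lebesgue) \<partial>lebesgue)"
    by (rule lebp.Fubini_integral[OF Gint])
  have int1: "integrable lebesgue (\<lambda>x. indicator {a..b} x * (r' x * F0 x))"
    using lebp.integrable_fst[OF Gint] by (simp add: inner_y)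
  obtain Br where Br: "Br > 0" "\<And>x. x \<in> {a..b} \<Longrightarrow> norm (r x) \<le> Br"
    using cont_bounded_Icc[OF rc] by blast
  have int2: "integrable lebesgue (\<lambda>x. indicator {a..b} x * (r x * f x))"
  proof (rule Bochner_Integration.integrable_bound)
    show "integrable lebesgue (\<lambda>x. Br * norm (indicator {a..b} x * f x))"
      using fi[of a b] by (simp add: set_integrable_complex)
    show "AE x in lebesgue. norm (indicator {a..b} x * (r x * f x)) \<le> norm (Br * norm (indicator {a..b} x * f x))"
      using Br by (auto simp: indicator_def norm_mult intro!: mult_right_mono AE_I2)
  qed measurable
  have int3: "integrable lebesgue (\<lambda>y. indicator {a..b} y * f y)"
    using fi[of a b] by (simp add: set_integrable_complex)
  have eq: "(\<integral>x. indicator {a..b} x * (r' x * F0 x) \<partial>lebesgue) + (\<integral>x. indicator {a..b} x * (r x * f x) \<partial>lebesgue)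
      = r b * F0 b"
  proof -
    have "(\<integral>x. indicator {a..b} x * (r' x * F0 x) \<partial>lebesgue) = (\<integral>y. indicator {a..b} y * (f y * (r b - r y)) \<partial>lebesgue)"
      using fub by (simp add: inner_x inner_y)
    also have "\<dots> = (\<integral>y. r b * (indicator {a..b} y * f y) - indicator {a..b} y * (r y * f y) \<partial>lebesgue)"
      by (intro Bochner_Integration.integral_cong) (auto simp: algebra_simps)
    also have "\<dots> = r b * (\<integral>y. indicator {a..b} y * f y \<partial>lebesgue) - (\<integral>y. indicator {a..b} y * (r y * f y) \<partial>lebesgue)"
      using int2 int3 by simp
    finally show ?thesis unfolding F0_def by simp
  qed
  have h1: "((\<lambda>x. r' x * F0 x) has_integral (\<integral>x. indicator {a..b} x * (r' x * F0 x) \<partial>lebesgue)) {a..b}"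
    by (rule has_integral_set_complex) (simp add: set_integrable_complex int1)
  have h2: "((\<lambda>x. r x * f x) has_integral (\<integral>x. indicator {a..b} x * (r x * f x) \<partial>lebesgue)) {a..b}"
    by (rule has_integral_set_complex) (simp add: set_integrable_complex int2)
  have h3: "((\<lambda>x. F a * r' x) has_integral (F a * (r b - r a))) {a..b}"
    by (rule has_integral_mult_right[OF primD[OF prim_FTC[OF r] ab]])
  have "((\<lambda>x. F a * r' x + (r' x * F0 x + r x * f x)) has_integral (F a * (r b - r a) + r b * F0 b)) {a..b}"
    using has_integral_add[OF h3 has_integral_add[OF h1 h2]] eq by simp
  then have "((\<lambda>x. r' x * F x + r x * f x) has_integral (F a * (r b - r a) + r b * F0 b)) {a..b}"
  proof (rule has_integral_eq[rotated])
    fix x assume x: "x \<in> {a..b}"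
    have "F x = F a + F0 x" by (rule FF0[OF x])
    then show "F a * r' x + (r' x * F0 x + r x * f x) = r' x * F x + r x * f x"
      by (simp add: algebra_simps)
  qed
  moreover have "F a * (r b - r a) + r b * F0 b = r b * F b - r a * F a"
  proof -
    have "F b = F a + F0 b" using FF0[of b] ab by simp
    then show ?thesis by (simp add: algebra_simps)
  qed
  ultimately show "((\<lambda>x. r' x * F x + r x * f x) has_integral r b * F b - r a * F a) {a..b}" by simp
qed

lemma inv_vd:
  fixes u :: "real \<Rightarrow> complex"
  assumes "u x \<noteq> 0" "(u has_vector_derivative d) (at x)"
  shows "((\<lambda>x. 1 / u x) has_vector_derivative (- d / (u x)^2)) (at x)"
proof -
  have "((inverse \<circ> u) has_vector_derivative (d * - (inverse (u x) ^ Suc (Suc 0)))) (at x)"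
    by (rule field_vector_diff_chain_at[OF assms(2) DERIV_inverse[OF assms(1)]])
  moreover have "d * - (inverse (u x) ^ Suc (Suc 0)) = - d / (u x)^2"
    by (simp add: field_simps power2_eq_square)
  moreover have "(inverse \<circ> u) = (\<lambda>x. 1 / u x)" by (simp add: fun_eq_iff inverse_eq_divide)
  ultimately show ?thesis by simp
qed

lemma emeas_Icc_fin: "emeasure lborel {a..b::real} < top"
  using emeasure_lborel_cbox_finite[of a b] by simp

lemma L2_set_integrable:
  assumes "L2 h" shows "set_integrable lebesgue {a..b} h"
proof -
  have "L2 (\<lambda>x. indicator {a..b} x :: complex)"
    unfolding L2_def
  proof
    show "integrable lebesgue (\<lambda>x. (norm (indicator {a..b} x :: complex))\<^sup>2)"
    proof -
      have "integrable lebesgue (indicator {a..b} :: real \<Rightarrow> real)"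
        by (rule integrable_real_indicator) (simp_all add: emeas_Icc_fin)
      moreover have "(\<lambda>x. (norm (indicator {a..b} x :: complex))\<^sup>2) = indicator {a..b}"
        by (auto simp: fun_eq_iff indicator_def)
      ultimately show ?thesis by simp
    qed
  qed measurable
  from L2_prod_integrable[OF this assms] show ?thesis by (simp add: set_integrable_complex)
qed

lemma set_integrable_cont_mult:
  fixes r f :: "real \<Rightarrow> complex"
  assumes rc: "continuous_on UNIV r" and fi: "set_integrable lebesgue {a..b} f"
    and fm: "f \<in> borel_measurable lebesgue"
  shows "set_integrable lebesgue {a..b} (\<lambda>x. r x * f x)"
proof -
  obtain Br where Br: "Br > 0" "\<And>x. x \<in> {a..b} \<Longrightarrow> norm (r x) \<le> Br"
    using cont_bounded_Icc[OF rc] by blast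
  have [measurable]: "r \<in> borel_measurable lebesgue" "f \<in> borel_measurable lebesgue"
    using cont_meas[OF rc] fm by auto
  have "integrable lebesgue (\<lambda>x. indicator {a..b} x * (r x * f x))"
  proof (rule Bochner_Integration.integrable_bound)
    show "integrable lebesgue (\<lambda>x. Br * norm (indicator {a..b} x * f x))"
      using fi by (simp add: set_integrable_complex)
    show "AE x in lebesgue. norm (indicator {a..b} x * (r x * f x)) \<le> norm (Br * norm (indicator {a..b} x * f x))"
      using Br by (auto simp: indicator_def norm_mult intro!: mult_right_mono AE_I2)
  qed measurable
  then show ?thesis by (simp add: set_integrable_complex)
qed

lemma solver:
  fixes u u1 u2 h P Q :: "real \<Rightarrow> complex"
  assumes u: "\<And>x. (u has_vector_derivative u1 x) (at x)" and u1: "\<And>x. (u1 has_vector_derivative u2 x) (at x)"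
    and u2c: "continuous_on UNIV u2"
    and unz: "\<And>x. u x \<noteq> 0"
    and sig: "\<And>x. norm (u1 x / u x) \<le> Bs"
    and qb: "\<And>x. norm (u2 x / u x) \<le> Bq"
    and h: "L2 h"
    and P: "prim (\<lambda>x. u x * h x) P"
    and Pb: "\<And>x. ennreal (norm (P x / u x)) \<le> (\<integral>\<^sup>+y. ennreal (C1 * kappa (x - y) * norm (h y)) \<partial>lebesgue)"
    and Q: "\<And>x. (Q has_vector_derivative (P x / u x) / u x) (at x)"
    and Qb: "\<And>x. ennreal (norm (u x * Q x)) \<le> (\<integral>\<^sup>+y. ennreal (C2 * kappa (x - y) * norm (P y / u y)) \<partial>lebesgue)"
    and C: "0 \<le> C1" "0 \<le> C2"
  shows "L2 (\<lambda>x. u x * Q x) \<and> L2 (\<lambda>x. u1 x * Q x + P x / u x) \<and>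
    L2 (\<lambda>x. u2 x / u x * (u x * Q x) + h x) \<and>
    weak_dd (\<lambda>x. u x * Q x) (\<lambda>x. u1 x * Q x + P x / u x) (\<lambda>x. u2 x / u x * (u x * Q x) + h x)"
proof -
  have uc: "continuous_on UNIV u" by (rule vd_continuous[OF u])
  have u1c: "continuous_on UNIV u1" by (rule vd_continuous[OF u1])
  have Qc: "continuous_on UNIV Q" by (rule vd_continuous[OF Q])
  have hm[measurable]: "h \<in> borel_measurable lebesgue" using h by (simp add: L2_def)
  have um[measurable]: "u \<in> borel_measurable lebesgue" by (rule cont_meas[OF uc])
  have uhm: "(\<lambda>x. u x * h x) \<in> borel_measurable lebesgue" by measurable
  have uhi: "set_integrable lebesgue {a..b} (\<lambda>x. u x * h x)" for a b
    by (rule set_integrable_cont_mult[OF uc L2_set_integrable[OF h] hm])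
  have Pc: "continuous_on UNIV P"
    by (rule prim_continuous[OF P]) (use uhi in \<open>simp add: set_lebesgue_integral_eq_integral(1)\<close>)
  have pc: "continuous_on UNIV (\<lambda>x. P x / u x)"
    by (intro continuous_intros Pc uc) (use unz in auto)
  have pL2: "L2 (\<lambda>x. P x / u x)"
    by (rule schur_L2[OF h cont_meas[OF pc] C(1) Pb])
  have zc: "continuous_on UNIV (\<lambda>x. u x * Q x)" by (intro continuous_intros uc Qc)
  have zL2: "L2 (\<lambda>x. u x * Q x)"
    by (rule schur_L2[OF pL2 cont_meas[OF zc] C(2) Qb])
  have sc: "continuous_on UNIV (\<lambda>x. u1 x / u x)"
    by (intro continuous_intros u1c uc) (use unz in auto)
  have qc: "continuous_on UNIV (\<lambda>x. u2 x / u x)"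
    by (intro continuous_intros u2c uc) (use unz in auto)
  have z1L2: "L2 (\<lambda>x. u1 x * Q x + P x / u x)"
  proof -
    have "L2 (\<lambda>x. u1 x / u x * (u x * Q x))"
      by (rule L2_mult_bounded[OF zL2 cont_meas[OF sc] sig])
    moreover have "(\<lambda>x. u1 x / u x * (u x * Q x)) = (\<lambda>x. u1 x * Q x)"
      using unz by (simp add: fun_eq_iff)
    ultimately show ?thesis using L2_add[OF _ pL2] by simp
  qed
  have z2L2: "L2 (\<lambda>x. u2 x / u x * (u x * Q x) + h x)"
    by (rule L2_add[OF L2_mult_bounded[OF zL2 cont_meas[OF qc] qb] h])
  have dz: "((\<lambda>x. u x * Q x) has_vector_derivative (u1 x * Q x + P x / u x)) (at x)" for x
  proof -
    have "((\<lambda>x. u x * Q x) has_vector_derivative (u x * ((P x / u x) / u x) + u1 x * Q x)) (at x)"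
      by (rule has_vector_derivative_mult[OF u Q])
    moreover have "u x * ((P x / u x) / u x) + u1 x * Q x = u1 x * Q x + P x / u x"
      using unz[of x] by (simp add: field_simps)
    ultimately show ?thesis by metis
  qed
  have prim1: "prim (\<lambda>x. u1 x * ((P x / u x) / u x) + u2 x * Q x) (\<lambda>x. u1 x * Q x)"
  proof (rule prim_FTC)
    fix x
    show "((\<lambda>x. u1 x * Q x) has_vector_derivative (u1 x * ((P x / u x) / u x) + u2 x * Q x)) (at x)"
      by (rule has_vector_derivative_mult[OF u1 Q])
  qed
  have dinv: "((\<lambda>x. 1 / u x) has_vector_derivative (- u1 x / (u x)^2)) (at x)" for x
    by (rule inv_vd[OF unz u])
  have invc: "continuous_on UNIV (\<lambda>x. - u1 x / (u x)^2)"
    by (intro continuous_intros u1c uc) (use unz in auto)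
  have prim2: "prim (\<lambda>x. - u1 x / (u x)^2 * P x + 1 / u x * (u x * h x)) (\<lambda>x. 1 / u x * P x)"
    by (rule prim_ibp[OF P uhi uhm dinv invc])
  have prim3: "prim (\<lambda>x. u2 x / u x * (u x * Q x) + h x) (\<lambda>x. u1 x * Q x + P x / u x)"
  proof (rule prim_cong[OF prim_add[OF prim1 prim2]])
    fix x
    show "u1 x * ((P x / u x) / u x) + u2 x * Q x + (- u1 x / (u x)^2 * P x + 1 / u x * (u x * h x))
      = u2 x / u x * (u x * Q x) + h x"
      using unz[of x] by (simp add: field_simps power2_eq_square)
    show "u1 x * Q x + 1 / u x * P x = u1 x * Q x + P x / u x" by simp
  qed
  show ?thesis using zL2 z1L2 z2L2 dz prim3 unfolding weak_dd_def prim_def by blast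
qed

lemma bound_nn:
  fixes g :: "real \<Rightarrow> complex"
  assumes "integrable lebesgue g" "\<And>y. norm (g y) \<le> B y"
  shows "ennreal (norm (\<integral>y. g y \<partial>lebesgue)) \<le> (\<integral>\<^sup>+y. ennreal (B y) \<partial>lebesgue)"
proof -
  have "ennreal (norm (\<integral>y. g y \<partial>lebesgue)) \<le> (\<integral>\<^sup>+y. norm (g y) \<partial>lebesgue)"
    by (rule integral_norm_bound_ennreal[OF assms(1)])
  also have "\<dots> \<le> (\<integral>\<^sup>+y. ennreal (B y) \<partial>lebesgue)"
    by (intro nn_integral_mono ennreal_leI assms(2))
  finally show ?thesis .
qed

lemma AE_leb_neq: "AE y in lebesgue. y \<noteq> (c::real)"
  by (rule AE_completion[OF AE_lborel_singleton])

lemma prim_lower_int: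
  fixes g :: "real \<Rightarrow> complex"
  assumes gi: "\<And>x. integrable lebesgue (\<lambda>y. indicator {..x} y * g y)"
    and gs: "\<And>a b. set_integrable lebesgue {a..b} g"
  shows "prim g (\<lambda>x. \<integral>y. indicator {..x} y * g y \<partial>lebesgue)"
  unfolding prim_def
proof (intro allI impI)
  fix a b :: real assume ab: "a \<le> b"
  have "(\<integral>y. indicator {..b} y * g y \<partial>lebesgue) - (\<integral>y. indicator {..a} y * g y \<partial>lebesgue)
      = (\<integral>y. indicator {..b} y * g y - indicator {..a} y * g y \<partial>lebesgue)"
    using gi by simp
  also have "\<dots> = (\<integral>y. indicator {a..b} y * g y \<partial>lebesgue)"
  proof (rule integral_cong_AE)
    show "(\<lambda>y. indicator {..b} y * g y - indicator {..a} y * g y) \<in> borel_measurable lebesgue"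
      using gi[of a] gi[of b] by (intro borel_measurable_integrable) simp
    show "(\<lambda>y. indicator {a..b} y * g y) \<in> borel_measurable lebesgue"
      using gs[of a b] by (intro borel_measurable_integrable) (simp add: set_integrable_complex)
  qed (use AE_leb_neq[of a] ab in \<open>auto simp: indicator_def elim!: eventually_mono\<close>)
  finally show "(g has_integral (\<integral>y. indicator {..b} y * g y \<partial>lebesgue) - (\<integral>y. indicator {..a} y * g y \<partial>lebesgue)) {a..b}"
    using has_integral_set_complex[OF gs[of a b]] by simp
qed

lemma prim_upper_int:
  fixes g :: "real \<Rightarrow> complex"
  assumes gi: "\<And>x. integrable lebesgue (\<lambda>y. indicator {x..} y * g y)"
    and gs: "\<And>a b. set_integrable lebesgue {a..b} g"
  shows "prim g (\<lambda>x. - (\<integral>y. indicator {x..} y * g y \<partial>lebesgue))"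
  unfolding prim_def
proof (intro allI impI)
  fix a b :: real assume ab: "a \<le> b"
  have "- (\<integral>y. indicator {b..} y * g y \<partial>lebesgue) - - (\<integral>y. indicator {a..} y * g y \<partial>lebesgue)
      = (\<integral>y. indicator {a..} y * g y - indicator {b..} y * g y \<partial>lebesgue)"
    using gi by simp
  also have "\<dots> = (\<integral>y. indicator {a..b} y * g y \<partial>lebesgue)"
  proof (rule integral_cong_AE)
    show "(\<lambda>y. indicator {a..} y * g y - indicator {b..} y * g y) \<in> borel_measurable lebesgue"
      using gi[of a] gi[of b] by (intro borel_measurable_integrable) simp
    show "(\<lambda>y. indicator {a..b} y * g y) \<in> borel_measurable lebesgue"
      using gs[of a b] by (intro borel_measurable_integrable) (simp add: set_integrable_complex)
  qed (use AE_leb_neq[of b] ab in \<open>auto simp: indicator_def elim!: eventually_mono\<close>)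
  finally show "(g has_integral - (\<integral>y. indicator {b..} y * g y \<partial>lebesgue) - - (\<integral>y. indicator {a..} y * g y \<partial>lebesgue)) {a..b}"
    using has_integral_set_complex[OF gs[of a b]] by simp
qed

definition antider :: "(real \<Rightarrow> complex) \<Rightarrow> real \<Rightarrow> complex" where
  "antider g x = (if 0 \<le> x then integral {0..x} g else - integral {x..0} g)"

lemma prim_antider:
  fixes g :: "real \<Rightarrow> complex"
  assumes gc: "continuous_on UNIV g"
  shows "prim g (antider g)"
  unfolding prim_def
proof (intro allI impI)
  fix a b :: real assume ab: "a \<le> b"
  have gi: "g integrable_on {c..d}" for c d
    by (rule integrable_continuous_real[OF continuous_on_subset[OF gc]]) auto
  have "antider g b - antider g a = integral {a..b} g"
  proof (cases "0 \<le> a")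
    case True
    then show ?thesis using ab Henstock_Kurzweil_Integration.integral_combine[OF True ab gi[of 0 b]]
      by (simp add: antider_def algebra_simps)
  next
    case False
    show ?thesis
    proof (cases "0 \<le> b")
      case True
      then show ?thesis using False Henstock_Kurzweil_Integration.integral_combine[of a 0 b g] gi[of a b]
        by (simp add: antider_def algebra_simps)
    next
      case False': False
      then show ?thesis using False Henstock_Kurzweil_Integration.integral_combine[of a b 0 g] gi[of a 0] ab
        by (simp add: antider_def algebra_simps)
    qed
  qed
  then show "(g has_integral antider g b - antider g a) {a..b}"
    using gi[of a b] by (simp add: has_integral_integral)
qed

lemma antider_deriv:
  fixes g :: "real \<Rightarrow> complex"
  assumes gc: "continuous_on UNIV g"
  shows "(antider g has_vector_derivative g x) (at x)"
  by (rule prim_deriv[OF prim_antider[OF gc] gc])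

lemma antider_bound:
  fixes g :: "real \<Rightarrow> complex"
  assumes gc: "continuous_on UNIV g"
  shows "norm (antider g x) \<le> (\<integral>\<^sup>+y. ennreal ((indicator {0..x} y + indicator {x..0} y) * norm (g y)) \<partial>lebesgue)"
proof -
  have gs: "set_integrable lebesgue {c..d} g" for c d by (rule cont_set_integrable[OF gc])
  have I: "integral {c..d} g = (\<integral>y. indicator {c..d} y * g y \<partial>lebesgue)" for c d
    using has_integral_set_complex[OF gs[of c d]] by (simp add: integral_unique)
  have "ennreal (norm (\<integral>y. indicator {c..d} y * g y \<partial>lebesgue)) \<le>
      (\<integral>\<^sup>+y. ennreal ((indicator {0..x} y + indicator {x..0} y) * norm (g y)) \<partial>lebesgue)"
    if "{c..d} = {0..x} \<or> {c..d} = {x..0}" for c d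
  proof (rule bound_nn)
    show "integrable lebesgue (\<lambda>y. indicator {c..d} y * g y)"
      using gs[of c d] by (simp add: set_integrable_complex)
    show "norm (indicator {c..d} y * g y) \<le> (indicator {0..x} y + indicator {x..0} y) * norm (g y)" for y
      using that by (auto simp: indicator_def norm_mult)
  qed
  then show ?thesis unfolding antider_def I by (auto simp: norm_minus_cancel)
qed

lemma integrable_ind_mult:
  fixes f :: "real \<Rightarrow> complex"
  assumes "integrable lebesgue f" "A \<in> sets lebesgue"
  shows "integrable lebesgue (\<lambda>y. indicator A y * f y)"
proof (rule Bochner_Integration.integrable_bound[OF integrable_norm[OF assms(1)]])
  show "(\<lambda>y. indicator A y * f y) \<in> borel_measurable lebesgue"
    using assms by (intro borel_measurable_times borel_measurable_indicator borel_measurable_integrable) auto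
  show "AE x in lebesgue. norm (indicator A x * f x) \<le> norm (norm (f x))"
    by (auto simp: indicator_def intro!: AE_I2)
qed

lemma kc_nz: "kc x \<noteq> 0" using kappa_pos[of x] by (simp add: kc_def)

lemma kc_cont: "continuous_on UNIV kc"
  unfolding kc_def by (intro continuous_intros continuous_kappa)

lemma kappa_ratio2:
  assumes "\<bar>a\<bar> + \<bar>a - b\<bar> \<le> \<bar>b\<bar>"
  shows "kappa b / kappa a \<le> 2 * kappa (a - b)"
  using kappa_ratio[OF assms] by (simp add: kappa_def)

lemma solve_L:
  fixes h :: "real \<Rightarrow> complex"
  assumes h: "L2 h" and orth: "(\<integral>x. kc x * h x \<partial>lebesgue) = 0"
  shows "\<exists>w w1 w2. L2 w \<and> L2 w1 \<and> L2 w2 \<and> weak_dd w w1 w2 \<and>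
     (\<forall>x. w2 x = complex_of_real (rho x) * w x + h x)"
proof -
  define u1 where "u1 x = complex_of_real (kd x)" for x
  define u2 where "u2 x = complex_of_real (rho x * kappa x)" for x
  have du: "(kc has_vector_derivative u1 x) (at x)" for x
    unfolding kc_def u1_def by (rule has_vector_derivative_of_real[OF kappa_deriv])
  have du1: "(u1 has_vector_derivative u2 x) (at x)" for x
    unfolding u2_def u1_def[abs_def] by (rule has_vector_derivative_of_real[OF kd_deriv])
  have u2c: "continuous_on UNIV u2"
    unfolding u2_def by (intro continuous_intros continuous_rho continuous_kappa)
  have sig: "norm (u1 x / kc x) \<le> 1" for x
  proof -
    have "u1 x / kc x = complex_of_real (- tau x / 2)"
      using kappa_pos[of x] by (simp add: u1_def kc_def kd_def)
    then show ?thesis using abs_tau_le1[of x] by simp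
  qed
  have qb: "norm (u2 x / kc x) \<le> 1" for x
  proof -
    have "u2 x / kc x = complex_of_real (rho x)"
      using kappa_pos[of x] by (simp add: u2_def kc_def)
    then show ?thesis using rho_bound[of x] by simp
  qed
  have hm[measurable]: "h \<in> borel_measurable lebesgue" using h by (simp add: L2_def)
  define g where "g y = kc y * h y" for y
  have gint: "integrable lebesgue g" unfolding g_def by (rule L2_prod_integrable[OF L2_kc h])
  have gs: "set_integrable lebesgue {a..b} g" for a b
    unfolding g_def by (rule set_integrable_cont_mult[OF kc_cont L2_set_integrable[OF h] hm])
  define P where "P x = (\<integral>y. indicator {..x} y * g y \<partial>lebesgue)" for x
  have Pprim: "prim g P"
    unfolding P_def[abs_def] by (rule prim_lower_int[OF integrable_ind_mult[OF gint] gs]) auto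
  have P_alt: "P x = - (\<integral>y. indicator {x<..} y * g y \<partial>lebesgue)" for x
  proof -
    have "(\<integral>y. g y \<partial>lebesgue) = (\<integral>y. indicator {..x} y * g y + indicator {x<..} y * g y \<partial>lebesgue)"
      by (intro Bochner_Integration.integral_cong) (auto simp: indicator_def)
    also have "\<dots> = P x + (\<integral>y. indicator {x<..} y * g y \<partial>lebesgue)"
      unfolding P_def by (intro Bochner_Integration.integral_add integrable_ind_mult[OF gint]) auto
    finally show ?thesis using orth unfolding g_def by (simp add: eq_neg_iff_add_eq_0 add.commute)
  qed
  have Pb: "ennreal (norm (P x / kc x)) \<le> (\<integral>\<^sup>+y. ennreal (2 * kappa (x - y) * norm (h y)) \<partial>lebesgue)" for x
  proof (cases "x \<le> 0")
    case True
    have "P x / kc x = (\<integral>y. indicator {..x} y * g y / kc x \<partial>lebesgue)" unfolding P_def by simp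
    moreover have "ennreal (norm (\<integral>y. indicator {..x} y * g y / kc x \<partial>lebesgue)) \<le> (\<integral>\<^sup>+y. ennreal (2 * kappa (x - y) * norm (h y)) \<partial>lebesgue)"
    proof (rule bound_nn)
      show "integrable lebesgue (\<lambda>y. indicator {..x} y * g y / kc x)"
        using integrable_ind_mult[OF gint, of "{..x}"] by simp
      fix y
      show "norm (indicator {..x} y * g y / kc x) \<le> 2 * kappa (x - y) * norm (h y)"
      proof (cases "y \<le> x")
        case yx: True
        have "kappa y / kappa x \<le> 2 * kappa (x - y)"
          by (rule kappa_ratio2) (use True yx in auto)
        then have "kappa y / kappa x * norm (h y) \<le> 2 * kappa (x - y) * norm (h y)"
          by (rule mult_right_mono) simp
        then show ?thesis using yx by (simp add: g_def kc_def norm_mult norm_divide)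
      qed (simp add: indicator_def)
    qed
    ultimately show ?thesis by metis
  next
    case False
    have "P x / kc x = - (\<integral>y. indicator {x<..} y * g y / kc x \<partial>lebesgue)" unfolding P_alt by simp
    moreover have "ennreal (norm (\<integral>y. indicator {x<..} y * g y / kc x \<partial>lebesgue)) \<le> (\<integral>\<^sup>+y. ennreal (2 * kappa (x - y) * norm (h y)) \<partial>lebesgue)"
    proof (rule bound_nn)
      show "integrable lebesgue (\<lambda>y. indicator {x<..} y * g y / kc x)"
        using integrable_ind_mult[OF gint, of "{x<..}"] by simp
      fix y
      show "norm (indicator {x<..} y * g y / kc x) \<le> 2 * kappa (x - y) * norm (h y)"
      proof (cases "x < y")
        case yx: True
        have "kappa y / kappa x \<le> 2 * kappa (x - y)"
          by (rule kappa_ratio2) (use False yx in auto)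
        then have "kappa y / kappa x * norm (h y) \<le> 2 * kappa (x - y) * norm (h y)"
          by (rule mult_right_mono) simp
        then show ?thesis using yx by (simp add: g_def kc_def norm_mult norm_divide)
      qed (simp add: indicator_def)
    qed
    ultimately show ?thesis by (simp add: norm_minus_cancel)
  qed
  have Pc: "continuous_on UNIV P"
    by (rule prim_continuous[OF Pprim]) (use gs in \<open>simp add: set_lebesgue_integral_eq_integral(1)\<close>)
  define pu where "pu y = (P y / kc y) / kc y" for y
  have puc: "continuous_on UNIV pu"
    unfolding pu_def by (intro continuous_intros Pc kc_cont) (auto simp: kc_nz)
  define Q where "Q = antider pu"
  have dQ: "(Q has_vector_derivative (P x / kc x) / kc x) (at x)" for x
    unfolding Q_def using antider_deriv[OF puc] by (simp add: pu_def)
  have Qb: "ennreal (norm (kc x * Q x)) \<le> (\<integral>\<^sup>+y. ennreal (4 * kappa (x - y) * norm (P y / kc y)) \<partial>lebesgue)" for x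
  proof -
    have "ennreal (norm (kc x * Q x)) = ennreal (kappa x) * ennreal (norm (Q x))"
      by (simp add: kc_def norm_mult ennreal_mult)
    also have "\<dots> \<le> ennreal (kappa x) * (\<integral>\<^sup>+y. ennreal ((indicator {0..x} y + indicator {x..0} y) * norm (pu y)) \<partial>lebesgue)"
      unfolding Q_def by (intro mult_left_mono ennreal_leI antider_bound[OF puc]) simp
    also have "\<dots> = (\<integral>\<^sup>+y. ennreal (kappa x) * ennreal ((indicator {0..x} y + indicator {x..0} y) * norm (pu y)) \<partial>lebesgue)"
    proof -
      have [measurable]: "pu \<in> borel_measurable lebesgue" by (rule cont_meas[OF puc])
      show ?thesis by (rule nn_integral_cmult[symmetric]) measurable
    qed
    also have "\<dots> \<le> (\<integral>\<^sup>+y. ennreal (4 * kappa (x - y) * norm (P y / kc y)) \<partial>lebesgue)"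
    proof (rule nn_integral_mono)
      fix y
      have "kappa x * ((indicator {0..x} y + indicator {x..0} y) * norm (pu y)) \<le> 4 * kappa (x - y) * norm (P y / kc y)"
      proof (cases "y \<in> {0..x} \<or> y \<in> {x..0}")
        case True
        have r: "kappa x / kappa y \<le> 2 * kappa (x - y)"
          using kappa_ratio2[of y x] True kappa_even[of "y - x"] by (auto simp: minus_diff_eq)
        have i: "indicator {0..x} y + indicator {x..0} y \<le> (2::real)" by (auto simp: indicator_def)
        have "kappa x * ((indicator {0..x} y + indicator {x..0} y) * norm (pu y))
            = (indicator {0..x} y + indicator {x..0} y) * (kappa x / kappa y * norm (P y / kc y))"
          using kappa_pos[of y] by (simp add: pu_def kc_def norm_divide norm_mult mult_ac)
        also have "\<dots> \<le> 2 * (2 * kappa (x - y) * norm (P y / kc y))"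
          by (intro mult_mono i mult_right_mono r) (auto intro!: add_nonneg_nonneg)
        finally show ?thesis by simp
      qed (auto simp: indicator_def)
      then show "ennreal (kappa x) * ennreal ((indicator {0..x} y + indicator {x..0} y) * norm (pu y))
          \<le> ennreal (4 * kappa (x - y) * norm (P y / kc y))"
        by (simp add: ennreal_mult[symmetric])
    qed
    finally show ?thesis .
  qed
  have Pprim': "prim (\<lambda>x. kc x * h x) P" using Pprim unfolding g_def[abs_def] .
  have c24: "0 \<le> (2::real)" "0 \<le> (4::real)" by simp_all
  note S = solver[OF du du1 u2c kc_nz sig qb h Pprim' Pb dQ Qb c24]
  have eq: "u2 x / kc x * (kc x * Q x) + h x = complex_of_real (rho x) * (kc x * Q x) + h x" for x
    using kappa_pos[of x] by (simp add: u2_def kc_def)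
  have feq: "(\<lambda>x. u2 x / kc x * (kc x * Q x) + h x) = (\<lambda>x. complex_of_real (rho x) * (kc x * Q x) + h x)"
    by (rule ext) (rule eq)
  have S': "L2 (\<lambda>x. kc x * Q x) \<and> L2 (\<lambda>x. u1 x * Q x + P x / kc x) \<and>
    L2 (\<lambda>x. complex_of_real (rho x) * (kc x * Q x) + h x) \<and>
    weak_dd (\<lambda>x. kc x * Q x) (\<lambda>x. u1 x * Q x + P x / kc x) (\<lambda>x. complex_of_real (rho x) * (kc x * Q x) + h x)"
    using S unfolding feq .
  show ?thesis
    apply (rule exI[of _ "\<lambda>x. kc x * Q x"])
    apply (rule exI[of _ "\<lambda>x. u1 x * Q x + P x / kc x"])
    apply (rule exI[of _ "\<lambda>x. complex_of_real (rho x) * (kc x * Q x) + h x"])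
    using S' by simp
qed

definition kk :: complex where "kk = csqrt (1 + 8 * \<i>)"

lemma kk_sq: "kk^2 = 1 + 8 * \<i>" by (simp add: kk_def)

lemma kk_Re_Im: "(Re kk)^2 - (Im kk)^2 = 1" "2 * Re kk * Im kk = 8"
proof -
  have "Re (kk^2) = 1" "Im (kk^2) = 8" by (simp_all add: kk_sq)
  then show "(Re kk)^2 - (Im kk)^2 = 1" "2 * Re kk * Im kk = 8" by (simp_all add: Re_power2 Im_power2)
qed

lemma kk_Re_ge1: "1 \<le> Re kk"
proof -
  have "0 \<le> Re kk" by (simp add: kk_def Re_csqrt)
  moreover have "(Re kk)^2 = 1 + (Im kk)^2" using kk_Re_Im(1) by simp
  then have "1^2 \<le> (Re kk)^2" by simp
  ultimately show ?thesis using power2_le_imp_le by blast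
qed

lemma kk_Im_nz: "Im kk \<noteq> 0" using kk_Re_Im(2) by auto

definition tc :: "real \<Rightarrow> complex" where "tc x = complex_of_real (tau x)"
definition EE :: "real \<Rightarrow> complex" where "EE x = exp (- (kk * complex_of_real x) / 2)"
definition uu :: "real \<Rightarrow> complex" where "uu x = (tc x + kk) * EE x"
definition uu1 :: "real \<Rightarrow> complex" where
  "uu1 x = EE x * (complex_of_real (kappa x ^ 2) / 2 - kk * tc x / 2 - kk^2 / 2)"
definition uu2 :: "real \<Rightarrow> complex" where "uu2 x = (complex_of_real (rho x) + 2 * \<i>) * uu x"

lemma EE_deriv: "(EE has_vector_derivative (- kk / 2 * EE x)) (at x)"
proof -
  have d1: "((\<lambda>x. - (kk * complex_of_real x) / 2) has_vector_derivative (- kk / 2)) (at x)"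
  proof -
    have "((\<lambda>x. complex_of_real x) has_vector_derivative 1) (at x)"
      using has_vector_derivative_of_real[OF DERIV_ident] by simp
    then have "((\<lambda>x. kk * complex_of_real x) has_vector_derivative kk * 1) (at x)"
      by (rule has_vector_derivative_mult_right)
    then have "((\<lambda>x. kk * complex_of_real x / 2) has_vector_derivative kk * 1 / 2) (at x)"
      by (rule has_vector_derivative_divide)
    then have "((\<lambda>x. - (kk * complex_of_real x / 2)) has_vector_derivative - (kk * 1 / 2)) (at x)"
      by (rule has_vector_derivative_minus)
    then show ?thesis by simp
  qed
  have "((exp \<circ> (\<lambda>x. - (kk * complex_of_real x) / 2)) has_vector_derivative
      (- kk / 2 * exp (- (kk * complex_of_real x) / 2))) (at x)"
    by (rule field_vector_diff_chain_at[OF d1 DERIV_exp])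
  then show ?thesis unfolding EE_def by (simp add: o_def)
qed

lemma tc_deriv: "(tc has_vector_derivative complex_of_real (kappa x ^ 2 / 2)) (at x)"
  unfolding tc_def[abs_def] by (rule has_vector_derivative_of_real[OF tau_deriv])

lemma kappa2_deriv: "((\<lambda>x. complex_of_real (kappa x ^ 2)) has_vector_derivative complex_of_real (2 * kappa x * kd x)) (at x)"
proof -
  have "((\<lambda>x. kappa x * kappa x) has_real_derivative kd x * kappa x + kd x * kappa x) (at x)"
    by (rule DERIV_mult[OF kappa_deriv kappa_deriv])
  then have "((\<lambda>x. kappa x ^ 2) has_real_derivative 2 * kappa x * kd x) (at x)"
    by (simp add: power2_eq_square algebra_simps)
  then show ?thesis by (rule has_vector_derivative_of_real)
qed

lemma kd_c: "complex_of_real (kd x) = - tc x * kc x / 2"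
  by (simp add: kd_def tc_def kc_def)

lemma rho_c: "complex_of_real (rho x) = 1/4 - (kc x)^2 / 2"
proof -
  have "rho x = 1/4 - (kappa x)^2/2" using tau_kappa[of x] unfolding rho_tau by (simp add: field_simps)
  then show ?thesis by (simp add: kc_def)
qed

lemma uu_deriv: "(uu has_vector_derivative uu1 x) (at x)"
proof -
  have dt: "((\<lambda>x. tc x + kk) has_vector_derivative complex_of_real (kappa x ^ 2 / 2)) (at x)"
    using has_vector_derivative_add[OF tc_deriv has_vector_derivative_const] by simp
  have "((\<lambda>x. (tc x + kk) * EE x) has_vector_derivative
      ((tc x + kk) * (- kk / 2 * EE x) + complex_of_real (kappa x ^ 2 / 2) * EE x)) (at x)"
    by (rule has_vector_derivative_mult[OF dt EE_deriv])
  moreover have "(tc x + kk) * (- kk / 2 * EE x) + complex_of_real (kappa x ^ 2 / 2) * EE x = uu1 x"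
    unfolding uu1_def by (simp add: field_simps power2_eq_square)
  ultimately show ?thesis unfolding uu_def[abs_def] by simp
qed

lemma uu1_deriv: "(uu1 has_vector_derivative uu2 x) (at x)"
proof -
  have d: "((\<lambda>x. complex_of_real (kappa x ^ 2) / 2 - kk * tc x / 2 - kk^2 / 2) has_vector_derivative
      (complex_of_real (2 * kappa x * kd x) / 2 - kk * complex_of_real (kappa x ^ 2 / 2) / 2 - 0)) (at x)"
    by (intro has_vector_derivative_diff has_vector_derivative_divide kappa2_deriv
        has_vector_derivative_mult_right tc_deriv has_vector_derivative_const)
  have "(uu1 has_vector_derivative
     (EE x * (complex_of_real (2 * kappa x * kd x) / 2 - kk * complex_of_real (kappa x ^ 2 / 2) / 2 - 0) +
      - kk / 2 * EE x * (complex_of_real (kappa x ^ 2) / 2 - kk * tc x / 2 - kk^2 / 2))) (at x)"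
    unfolding uu1_def[abs_def] by (rule has_vector_derivative_mult[OF EE_deriv d])
  moreover have "EE x * (complex_of_real (2 * kappa x * kd x) / 2 - kk * complex_of_real (kappa x ^ 2 / 2) / 2 - 0) +
      - kk / 2 * EE x * (complex_of_real (kappa x ^ 2) / 2 - kk * tc x / 2 - kk^2 / 2) = uu2 x"
  proof -
    have i2: "2 * \<i> = (kk^2 - 1) / 4" using kk_sq by simp
    show ?thesis unfolding uu2_def uu_def rho_c i2
      by (simp add: kd_c field_simps power2_eq_square kc_def power3_eq_cube)
  qed
  ultimately show ?thesis by simp
qed

lemma uu2_cont: "continuous_on UNIV uu2"
  unfolding uu2_def uu_def tc_def EE_def
  by (intro continuous_intros continuous_rho continuous_tau) auto

lemma tc_kk_bounds: "\<bar>Im kk\<bar> \<le> norm (tc x + kk)" "norm (tc x + kk) \<le> 1 + norm kk"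
proof -
  show "\<bar>Im kk\<bar> \<le> norm (tc x + kk)" using abs_Im_le_cmod[of "tc x + kk"] by (simp add: tc_def)
  have "norm (tc x + kk) \<le> norm (tc x) + norm kk" by (rule norm_triangle_ineq)
  also have "norm (tc x) \<le> 1" using abs_tau_le1[of x] by (simp add: tc_def)
  finally show "norm (tc x + kk) \<le> 1 + norm kk" by simp
qed

lemma norm_EE: "norm (EE x) = exp (- (Re kk * x) / 2)"
  by (simp add: EE_def)

lemma uu_nz: "uu x \<noteq> 0"
  using tc_kk_bounds(1)[of x] kk_Im_nz by (auto simp: uu_def EE_def)

definition CC :: real where "CC = (1 + norm kk) / \<bar>Im kk\<bar>"

lemma CC_pos: "0 < CC" using kk_Im_nz by (simp add: CC_def add_pos_nonneg)

lemma uu_ratio: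
  assumes "x \<le> y"
  shows "norm (uu y) \<le> CC * kappa (x - y) * norm (uu x)"
proof -
  have e: "exp (- (Re kk * y) / 2) = exp (- (Re kk * (y - x)) / 2) * exp (- (Re kk * x) / 2)"
    by (simp add: exp_add[symmetric] algebra_simps)
  have e2: "exp (- (Re kk * (y - x)) / 2) \<le> kappa (x - y)"
  proof -
    have "exp (- (Re kk * (y - x)) / 2) \<le> exp (- \<bar>x - y\<bar> / 2)"
      using assms kk_Re_ge1 by (simp add: mult_right_mono abs_if)
    also have "\<dots> \<le> kappa (x - y)" by (rule exp_le_kappa)
    finally show ?thesis .
  qed
  have "norm (uu y) = norm (tc y + kk) * exp (- (Re kk * y) / 2)" by (simp add: uu_def norm_mult norm_EE)
  also have "\<dots> \<le> (1 + norm kk) * (kappa (x - y) * exp (- (Re kk * x) / 2))"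
    unfolding e by (intro mult_mono tc_kk_bounds mult_right_mono e2) auto
  also have "\<dots> = CC * kappa (x - y) * (\<bar>Im kk\<bar> * exp (- (Re kk * x) / 2))"
    using kk_Im_nz by (simp add: CC_def field_simps)
  also have "\<dots> \<le> CC * kappa (x - y) * (norm (tc x + kk) * exp (- (Re kk * x) / 2))"
    using CC_pos by (intro mult_left_mono mult_right_mono tc_kk_bounds) auto
  also have "\<dots> = CC * kappa (x - y) * norm (uu x)" by (simp add: uu_def norm_mult norm_EE)
  finally show ?thesis .
qed

lemma sig_bound: "norm (uu1 x / uu x) \<le> (1 + norm kk + (norm kk)^2) / \<bar>Im kk\<bar>"
proof -
  have "uu1 x / uu x = (complex_of_real (kappa x ^ 2) / 2 - kk * tc x / 2 - kk^2 / 2) / (tc x + kk)"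
    using uu_nz[of x] by (simp add: uu1_def uu_def EE_def)
  moreover have "norm (complex_of_real (kappa x ^ 2) / 2 - kk * tc x / 2 - kk^2 / 2) \<le> 1 + norm kk + (norm kk)^2"
  proof -
    have "norm (complex_of_real (kappa x ^ 2) / 2 - kk * tc x / 2 - kk^2 / 2)
        \<le> norm (complex_of_real (kappa x ^ 2) / 2) + norm (kk * tc x / 2) + norm (kk^2 / 2)"
      by (rule order_trans[OF norm_triangle_ineq4 add_mono[OF norm_triangle_ineq4 order_refl]])
    also have "\<dots> \<le> 1 + norm kk + (norm kk)^2"
    proof -
      have "kappa x ^ 2 \<le> 1" using kappa_le1[of x] kappa_nonneg[of x] by (simp add: power_le_one)
      then have n1: "norm (complex_of_real (kappa x ^ 2) / 2) \<le> 1" by (simp add: norm_divide norm_power)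
      have "norm (tc x) \<le> 1" using abs_tau_le1[of x] by (simp add: tc_def)
      then have "norm kk * norm (tc x) \<le> norm kk * 1" by (intro mult_left_mono) auto
      moreover have "norm (kk * tc x / 2) = norm kk * norm (tc x) / 2" by (simp add: norm_mult norm_divide)
      moreover have "0 \<le> norm kk" by simp
      ultimately have n2: "norm (kk * tc x / 2) \<le> norm kk" by linarith
      have n3: "norm (kk^2 / 2) \<le> (norm kk)^2" by (simp add: norm_divide norm_power)
      show ?thesis using add_mono[OF add_mono[OF n1 n2] n3] .
    qed
    finally show ?thesis .
  qed
  ultimately show ?thesis using tc_kk_bounds(1)[of x] kk_Im_nz
    by (auto simp: norm_divide intro!: frac_le)
qed

lemma qb_bound: "norm (uu2 x / uu x) \<le> 3"
proof -
  have "uu2 x / uu x = complex_of_real (rho x) + 2 * \<i>" using uu_nz[of x] by (simp add: uu2_def)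
  moreover have "norm (complex_of_real (rho x) + 2 * \<i>) \<le> norm (complex_of_real (rho x)) + norm (2 * \<i>)"
    by (rule norm_triangle_ineq)
  ultimately show ?thesis using rho_bound[of x] by (simp add: norm_mult)
qed

lemma uu_cont: "continuous_on UNIV uu"
  unfolding uu_def tc_def EE_def by (intro continuous_intros continuous_tau) auto

lemma uu_meas[measurable]: "uu \<in> borel_measurable lebesgue" by (rule cont_meas[OF uu_cont])

lemma solve_Z:
  fixes g :: "real \<Rightarrow> complex"
  assumes g: "L2 g"
  shows "\<exists>z z1 z2. L2 z \<and> L2 z1 \<and> L2 z2 \<and> weak_dd z z1 z2 \<and>
     (\<forall>x. z2 x = (complex_of_real (rho x) + 2 * \<i>) * z x + g x)"
proof -
  have gm[measurable]: "g \<in> borel_measurable lebesgue" using g by (simp add: L2_def)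
  have ind_uu_L2: "L2 (\<lambda>y. indicator {x..} y * uu y)" for x
  proof (rule L2_bound[OF L2_kappa_shift[of x], where B="CC * norm (uu x)"])
    show "(\<lambda>y. indicator {x..} y * uu y) \<in> borel_measurable lebesgue" by measurable
    show "AE y in lebesgue. norm (indicator {x..} y * uu y) \<le> CC * norm (uu x) * norm (complex_of_real (kappa (x - y)))"
    proof (rule AE_I2)
      fix y
      show "norm (indicator {x..} y * uu y) \<le> CC * norm (uu x) * norm (complex_of_real (kappa (x - y)))"
      proof (cases "x \<le> y")
        case True
        then show ?thesis using uu_ratio[OF True] by (simp add: mult_ac)
      qed (use CC_pos in \<open>simp add: indicator_def less_imp_le\<close>)
    qed
  qed
  have gi: "integrable lebesgue (\<lambda>y. indicator {x..} y * (uu y * g y))" for x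
    using L2_prod_integrable[OF ind_uu_L2[of x] g] by (simp add: mult.assoc)
  have gs: "set_integrable lebesgue {a..b} (\<lambda>y. uu y * g y)" for a b
    by (rule set_integrable_cont_mult[OF uu_cont L2_set_integrable[OF g] gm])
  define P where "P x = - (\<integral>y. indicator {x..} y * (uu y * g y) \<partial>lebesgue)" for x
  have Pprim: "prim (\<lambda>y. uu y * g y) P"
    unfolding P_def[abs_def] by (rule prim_upper_int[OF gi gs])
  have Pb: "ennreal (norm (P x / uu x)) \<le> (\<integral>\<^sup>+y. ennreal (CC * kappa (x - y) * norm (g y)) \<partial>lebesgue)" for x
  proof -
    have "P x / uu x = - (\<integral>y. indicator {x..} y * (uu y * g y) / uu x \<partial>lebesgue)" unfolding P_def by simp
    moreover have "ennreal (norm (\<integral>y. indicator {x..} y * (uu y * g y) / uu x \<partial>lebesgue)) \<le> (\<integral>\<^sup>+y. ennreal (CC * kappa (x - y) * norm (g y)) \<partial>lebesgue)"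
    proof (rule bound_nn)
      show "integrable lebesgue (\<lambda>y. indicator {x..} y * (uu y * g y) / uu x)"
        using gi[of x] by simp
      fix y
      show "norm (indicator {x..} y * (uu y * g y) / uu x) \<le> CC * kappa (x - y) * norm (g y)"
      proof (cases "x \<le> y")
        case True
        have "norm (uu y) / norm (uu x) \<le> CC * kappa (x - y)"
          using uu_ratio[OF True] uu_nz[of x] by (simp add: divide_le_eq)
        then have "norm (uu y) / norm (uu x) * norm (g y) \<le> CC * kappa (x - y) * norm (g y)"
          by (rule mult_right_mono) simp
        then show ?thesis using True by (simp add: norm_mult norm_divide mult_ac)
      qed (use CC_pos in \<open>simp add: indicator_def less_imp_le\<close>)
    qed
    ultimately show ?thesis by (simp add: norm_minus_cancel)
  qed
  have Pc: "continuous_on UNIV P"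
    by (rule prim_continuous[OF Pprim]) (use gs in \<open>simp add: set_lebesgue_integral_eq_integral(1)\<close>)
  have pc: "continuous_on UNIV (\<lambda>x. P x / uu x)"
    by (intro continuous_intros Pc uu_cont) (use uu_nz in auto)
  have pL2: "L2 (\<lambda>x. P x / uu x)"
    by (rule schur_L2[OF g cont_meas[OF pc] _ Pb]) (use CC_pos in simp)
  have ind_inv_L2: "L2 (\<lambda>y. indicator {..x} y / uu y)" for x
  proof (rule L2_bound[OF L2_kappa_shift[of x], where B="CC / norm (uu x)"])
    show "(\<lambda>y. indicator {..x} y / uu y) \<in> borel_measurable lebesgue" by measurable
    show "AE y in lebesgue. norm (indicator {..x} y / uu y) \<le> CC / norm (uu x) * norm (complex_of_real (kappa (x - y)))"
    proof (rule AE_I2)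
      fix y
      show "norm (indicator {..x} y / uu y) \<le> CC / norm (uu x) * norm (complex_of_real (kappa (x - y)))"
      proof (cases "y \<le> x")
        case True
        have "norm (uu x) \<le> CC * kappa (x - y) * norm (uu y)"
          using uu_ratio[OF True] kappa_even[of "y - x"] by (simp add: minus_diff_eq)
        then have "1 / norm (uu y) \<le> CC * kappa (x - y) / norm (uu x)"
          using uu_nz[of x] uu_nz[of y] by (simp add: field_simps)
        then show ?thesis using True by (simp add: norm_divide)
      qed (use CC_pos in \<open>simp add: indicator_def less_imp_le\<close>)
    qed
  qed
  have qi: "integrable lebesgue (\<lambda>y. indicator {..x} y * (P y / uu y / uu y))" for x
    using L2_prod_integrable[OF ind_inv_L2[of x] pL2] by (simp add: field_simps)
  have qc: "continuous_on UNIV (\<lambda>y. P y / uu y / uu y)"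
    by (intro continuous_intros pc uu_cont) (use uu_nz in auto)
  define Q where "Q x = (\<integral>y. indicator {..x} y * (P y / uu y / uu y) \<partial>lebesgue)" for x
  have Qprim: "prim (\<lambda>y. P y / uu y / uu y) Q"
    unfolding Q_def[abs_def] by (rule prim_lower_int[OF qi cont_set_integrable[OF qc]])
  have dQ: "(Q has_vector_derivative (P x / uu x) / uu x) (at x)" for x
    by (rule prim_deriv[OF Qprim qc])
  have Qb: "ennreal (norm (uu x * Q x)) \<le> (\<integral>\<^sup>+y. ennreal (CC * kappa (x - y) * norm (P y / uu y)) \<partial>lebesgue)" for x
  proof -
    have "uu x * Q x = (\<integral>y. uu x * (indicator {..x} y * (P y / uu y / uu y)) \<partial>lebesgue)"
      unfolding Q_def by (rule integral_mult_right_zero[symmetric])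
    moreover have "ennreal (norm (\<integral>y. uu x * (indicator {..x} y * (P y / uu y / uu y)) \<partial>lebesgue)) \<le> (\<integral>\<^sup>+y. ennreal (CC * kappa (x - y) * norm (P y / uu y)) \<partial>lebesgue)"
    proof (rule bound_nn)
      show "integrable lebesgue (\<lambda>y. uu x * (indicator {..x} y * (P y / uu y / uu y)))"
        using integrable_mult_right[OF qi[of x], of "uu x"] by simp
      fix y
      show "norm (uu x * (indicator {..x} y * (P y / uu y / uu y))) \<le> CC * kappa (x - y) * norm (P y / uu y)"
      proof (cases "y \<le> x")
        case True
        have "norm (uu x) \<le> CC * kappa (x - y) * norm (uu y)"
          using uu_ratio[OF True] kappa_even[of "y - x"] by (simp add: minus_diff_eq)
        then have "norm (uu x) / norm (uu y) \<le> CC * kappa (x - y)"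
          using uu_nz[of y] by (simp add: divide_le_eq)
        then have "norm (uu x) / norm (uu y) * norm (P y / uu y) \<le> CC * kappa (x - y) * norm (P y / uu y)"
          by (rule mult_right_mono) simp
        then show ?thesis using True by (simp add: norm_mult norm_divide mult_ac)
      qed (use CC_pos in \<open>simp add: indicator_def less_imp_le\<close>)
    qed
    ultimately show ?thesis by metis
  qed
  have cpos: "0 \<le> CC" "0 \<le> CC" using CC_pos by simp_all
  note S = solver[OF uu_deriv uu1_deriv uu2_cont uu_nz sig_bound qb_bound g Pprim Pb dQ Qb cpos]
  have feq: "(\<lambda>x. uu2 x / uu x * (uu x * Q x) + g x) = (\<lambda>x. (complex_of_real (rho x) + 2 * \<i>) * (uu x * Q x) + g x)"
    using uu_nz by (simp add: fun_eq_iff uu2_def)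
  have S': "L2 (\<lambda>x. uu x * Q x) \<and> L2 (\<lambda>x. uu1 x * Q x + P x / uu x) \<and>
    L2 (\<lambda>x. (complex_of_real (rho x) + 2 * \<i>) * (uu x * Q x) + g x) \<and>
    weak_dd (\<lambda>x. uu x * Q x) (\<lambda>x. uu1 x * Q x + P x / uu x) (\<lambda>x. (complex_of_real (rho x) + 2 * \<i>) * (uu x * Q x) + g x)"
    using S unfolding feq .
  show ?thesis
    apply (rule exI[of _ "\<lambda>x. uu x * Q x"])
    apply (rule exI[of _ "\<lambda>x. uu1 x * Q x + P x / uu x"])
    apply (rule exI[of _ "\<lambda>x. (complex_of_real (rho x) + 2 * \<i>) * (uu x * Q x) + g x"])
    using S' by simp
qed

lemma emeasure_Ici_infinite: "emeasure lebesgue {X::real..} = \<infinity>"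
proof (rule ccontr)
  assume "emeasure lebesgue {X..} \<noteq> \<infinity>"
  then obtain r where r: "emeasure lebesgue {X..} = ennreal r" "0 \<le> r"
    by (cases "emeasure lebesgue {X..}") auto
  have "emeasure lebesgue {X..X + r + 1} \<le> emeasure lebesgue {X..}"
    by (rule emeasure_mono) auto
  moreover have "emeasure lebesgue {X..X + r + 1} = ennreal (r + 1)" using r(2) by simp
  ultimately show False using r by (simp add: ennreal_le_iff)
qed

lemma emeasure_Iic_infinite: "emeasure lebesgue {..X::real} = \<infinity>"
proof (rule ccontr)
  assume "emeasure lebesgue {..X} \<noteq> \<infinity>"
  then obtain r where r: "emeasure lebesgue {..X} = ennreal r" "0 \<le> r"
    by (cases "emeasure lebesgue {..X}") auto
  have "emeasure lebesgue {X - r - 1..X} \<le> emeasure lebesgue {..X}"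
    by (rule emeasure_mono) auto
  moreover have "emeasure lebesgue {X - r - 1..X} = ennreal (r + 1)" using r(2) by simp
  ultimately show False using r by (simp add: ennreal_le_iff)
qed

lemma emeasure_Ici_infinite'[simp]: "emeasure lborel {X::real..} = \<infinity>"
  using emeasure_Ici_infinite[of X] by simp
lemma emeasure_Iic_infinite'[simp]: "emeasure lborel {..X::real} = \<infinity>"
  using emeasure_Iic_infinite[of X] by simp

lemma halfline_not_integrable:
  fixes F :: "real \<Rightarrow> 'a::{banach, second_countable_topology}"
  assumes F: "integrable lebesgue F" and c: "0 < c"
    and bnd: "(\<forall>x\<ge>X. c \<le> norm (F x)) \<or> (\<forall>x\<le>X. c \<le> norm (F x))"
  shows False
proof -
  define A where "A = (if (\<forall>x\<ge>X. c \<le> norm (F x)) then {X..} else {..X})"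
  have A: "A \<in> sets lebesgue" "emeasure lebesgue A = \<infinity>" "\<And>x. x \<in> A \<Longrightarrow> c \<le> norm (F x)"
    using bnd by (auto simp: A_def emeasure_Ici_infinite emeasure_Iic_infinite split: if_splits)
  have "integrable lebesgue (\<lambda>x. indicator A x * c)"
  proof (rule Bochner_Integration.integrable_bound[OF integrable_norm[OF F]])
    show "(\<lambda>x. indicator A x * c) \<in> borel_measurable lebesgue" using A(1) by measurable
    show "AE x in lebesgue. norm (indicator A x * c) \<le> norm (norm (F x))"
      using A(3) c by (auto simp: indicator_def intro!: AE_I2)
  qed
  then have "integrable lebesgue (\<lambda>x. indicator A x * c * (1 / c))" by (rule integrable_mult_left)
  moreover have "(\<lambda>x. indicator A x * c * (1 / c)) = (indicator A :: real \<Rightarrow> real)"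
    using c by (auto simp: fun_eq_iff)
  ultimately have "integrable lebesgue (indicator A :: real \<Rightarrow> real)" by simp
  then show False using A(2) by (simp add: integrable_indicator_iff)
qed

lemma lim_integrable_zero_top:
  fixes W :: "real \<Rightarrow> complex"
  assumes "integrable lebesgue W" "(W \<longlongrightarrow> L) at_top"
  shows "L = 0"
proof (rule ccontr)
  assume L: "L \<noteq> 0"
  then have "eventually (\<lambda>x. dist (W x) L < norm L / 2) at_top"
    by (intro tendstoD[OF assms(2)]) simp
  then obtain X where X: "\<And>x. x \<ge> X \<Longrightarrow> dist (W x) L < norm L / 2"
    by (auto simp: eventually_at_top_linorder)
  have "norm L / 2 \<le> norm (W x)" if "x \<ge> X" for x
    using X[OF that] norm_triangle_ineq2[of L "W x"] by (simp add: dist_norm norm_minus_commute)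
  then show False using halfline_not_integrable[OF assms(1), of "norm L / 2" X] L by auto
qed

lemma lim_integrable_zero_bot:
  fixes W :: "real \<Rightarrow> complex"
  assumes "integrable lebesgue W" "(W \<longlongrightarrow> L) at_bot"
  shows "L = 0"
proof (rule ccontr)
  assume L: "L \<noteq> 0"
  then have "eventually (\<lambda>x. dist (W x) L < norm L / 2) at_bot"
    by (intro tendstoD[OF assms(2)]) simp
  then obtain X where X: "\<And>x. x \<le> X \<Longrightarrow> dist (W x) L < norm L / 2"
    by (auto simp: eventually_at_bot_linorder)
  have "norm L / 2 \<le> norm (W x)" if "x \<le> X" for x
    using X[OF that] norm_triangle_ineq2[of L "W x"] by (simp add: dist_norm norm_minus_commute)
  then show False using halfline_not_integrable[OF assms(1), of "norm L / 2" X] L by auto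
qed

lemma vd_zero_const:
  fixes f :: "real \<Rightarrow> complex"
  assumes "\<And>x. (f has_vector_derivative 0) (at x)"
  shows "f x = f y"
proof -
  have "\<exists>c. \<forall>x\<in>UNIV. f x = c"
    by (rule has_derivative_zero_constant[of UNIV])
       (use assms in \<open>auto simp: has_vector_derivative_def has_derivative_at_withinI\<close>)
  then show ?thesis by auto
qed

lemma L2_kd: "L2 (\<lambda>x. complex_of_real (kd x))"
proof (rule L2_bound[OF L2_kc, where B=1])
  show "(\<lambda>x. complex_of_real (kd x)) \<in> borel_measurable lebesgue"
    by (intro cont_meas continuous_intros continuous_kd)
  show "AE x in lebesgue. norm (complex_of_real (kd x)) \<le> 1 * norm (kc x)"
    using abs_kd_le by (auto simp: kc_def intro!: AE_I2)
qed

lemma kernel_w: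
  fixes w w1 :: "real \<Rightarrow> complex"
  assumes w: "L2 w" and w1: "L2 w1" and dw: "\<And>x. (w has_vector_derivative w1 x) (at x)"
    and dw1: "\<And>x. (w1 has_vector_derivative complex_of_real (rho x) * w x) (at x)"
  shows "\<exists>C. \<forall>x. w x = C * kc x"
proof -
  define Wr where "Wr x = w1 x * kc x - w x * complex_of_real (kd x)" for x
  have dkc: "(kc has_vector_derivative complex_of_real (kd x)) (at x)" for x
    unfolding kc_def[abs_def] by (rule has_vector_derivative_of_real[OF kappa_deriv])
  have dkd: "((\<lambda>x. complex_of_real (kd x)) has_vector_derivative complex_of_real (rho x * kappa x)) (at x)" for x
    by (rule has_vector_derivative_of_real[OF kd_deriv])
  have dWr: "(Wr has_vector_derivative 0) (at x)" for x
  proof -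
    have "(Wr has_vector_derivative
       ((w1 x * complex_of_real (kd x) + complex_of_real (rho x) * w x * kc x) -
        (w x * complex_of_real (rho x * kappa x) + w1 x * complex_of_real (kd x)))) (at x)"
      unfolding Wr_def[abs_def]
      by (intro has_vector_derivative_diff has_vector_derivative_mult dw dw1 dkc dkd)
    moreover have "(w1 x * complex_of_real (kd x) + complex_of_real (rho x) * w x * kc x) -
        (w x * complex_of_real (rho x * kappa x) + w1 x * complex_of_real (kd x)) = 0"
      by (simp add: kc_def algebra_simps)
    ultimately show ?thesis by metis
  qed
  have Wc: "Wr x = Wr 0" for x by (rule vd_zero_const[OF dWr])
  have Wi: "integrable lebesgue Wr"
    unfolding Wr_def by (intro Bochner_Integration.integrable_diff L2_prod_integrable w w1 L2_kc L2_kd)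
  have W0: "Wr 0 = 0"
  proof (rule ccontr)
    assume "Wr 0 \<noteq> 0"
    moreover have "\<forall>x\<ge>0. norm (Wr 0) \<le> norm (Wr x)"
    proof (intro allI impI)
      fix x :: real
      show "norm (Wr 0) \<le> norm (Wr x)" using Wc[of x] by simp
    qed
    ultimately show False
      using halfline_not_integrable[OF Wi, of "norm (Wr 0)" 0] by auto
  qed
  define R where "R x = w x * (1 / kc x)" for x
  have dR: "(R has_vector_derivative 0) (at x)" for x
  proof -
    have "(R has_vector_derivative (w x * (- complex_of_real (kd x) / (kc x)^2) + w1 x * (1 / kc x))) (at x)"
      unfolding R_def[abs_def] by (intro has_vector_derivative_mult dw inv_vd kc_nz dkc)
    moreover have "w x * (- complex_of_real (kd x) / (kc x)^2) + w1 x * (1 / kc x) = Wr x / (kc x)^2"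
      using kc_nz[of x] by (simp add: Wr_def field_simps power2_eq_square)
    ultimately show ?thesis using Wc[of x] W0 by simp
  qed
  have "w x = R 0 * kc x" for x
    using vd_zero_const[OF dR, of x 0] kc_nz[of x] by (simp add: R_def field_simps)
  then show ?thesis by blast
qed

lemma L2_cnj:
  assumes "L2 f" shows "L2 (\<lambda>x. cnj (f x))"
proof (rule L2_bound[OF assms, where B=1])
  have [measurable]: "f \<in> borel_measurable lebesgue" using assms by (simp add: L2_def)
  have "cnj \<in> borel_measurable borel"
    by (rule borel_measurable_continuous_onI) (intro continuous_intros)
  then show "(\<lambda>x. cnj (f x)) \<in> borel_measurable lebesgue"
    using measurable_compose[of f lebesgue borel cnj borel] by simp
qed auto

lemma kernel_z:
  fixes z z1 :: "real \<Rightarrow> complex"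
  assumes z: "L2 z" and z1: "L2 z1" and dz: "\<And>x. (z has_vector_derivative z1 x) (at x)"
    and dz1: "\<And>x. (z1 has_vector_derivative (complex_of_real (rho x) + 2 * \<i>) * z x) (at x)"
  shows "z x = 0"
proof -
  define F where "F x = Im (cnj (z x) * z1 x)" for x
  have dcnj: "((\<lambda>x. cnj (z x)) has_vector_derivative cnj (z1 x)) (at x)" for x
    by (rule bounded_linear.has_vector_derivative[OF bounded_linear_cnj dz])
  have dF: "(F has_real_derivative 2 * (norm (z x))^2) (at x)" for x
  proof -
    have "((\<lambda>x. cnj (z x) * z1 x) has_vector_derivative
        (cnj (z x) * ((complex_of_real (rho x) + 2 * \<i>) * z x) + cnj (z1 x) * z1 x)) (at x)"
      by (rule has_vector_derivative_mult[OF dcnj dz1])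
    then have "(F has_vector_derivative Im (cnj (z x) * ((complex_of_real (rho x) + 2 * \<i>) * z x) + cnj (z1 x) * z1 x)) (at x)"
      unfolding F_def[abs_def] by (rule bounded_linear.has_vector_derivative[OF bounded_linear_Im])
    moreover have "Im (cnj (z x) * ((complex_of_real (rho x) + 2 * \<i>) * z x) + cnj (z1 x) * z1 x) = 2 * (norm (z x))^2"
    proof -
      have a: "cnj (z x) * z x = complex_of_real ((norm (z x))^2)"
        using complex_norm_square[of "z x"] by (simp add: mult.commute)
      have b: "cnj (z1 x) * z1 x = complex_of_real ((norm (z1 x))^2)"
        using complex_norm_square[of "z1 x"] by (simp add: mult.commute)
      have e: "cnj (z x) * ((complex_of_real (rho x) + 2 * \<i>) * z x) + cnj (z1 x) * z1 x
          = (complex_of_real (rho x) + 2 * \<i>) * complex_of_real ((norm (z x))^2) + complex_of_real ((norm (z1 x))^2)"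
        by (simp only: a[symmetric] b[symmetric]) (simp add: algebra_simps)
      show ?thesis unfolding e by simp
    qed
    ultimately show ?thesis by (simp add: has_real_derivative_iff_has_vector_derivative)
  qed
  have mono: "F a \<le> F b" if "a \<le> b" for a b
  proof (rule DERIV_nonneg_imp_nondecreasing[OF that])
    fix x
    show "\<exists>y. (F has_real_derivative y) (at x) \<and> 0 \<le> y"
      by (intro exI[of _ "2 * (norm (z x))^2"] conjI dF) simp
  qed
  have Fi: "integrable lebesgue F"
    unfolding F_def by (intro integrable_Im L2_prod_integrable L2_cnj z z1)
  have F0: "F y = 0" for y
  proof (rule ccontr)
    assume "F y \<noteq> 0"
    then consider "F y > 0" | "F y < 0" by linarith
    then show False
    proof cases
      case 1
      have "\<forall>x\<ge>y. F y \<le> norm (F x)" using mono by (auto intro: order_trans[OF _ abs_ge_self])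
      then show False using halfline_not_integrable[OF Fi 1] by blast
    next
      case 2
      have "\<forall>x\<le>y. - F y \<le> norm (F x)" using mono by (auto intro: order_trans[OF _ abs_ge_minus_self])
      then show False using halfline_not_integrable[OF Fi, of "- F y" y] 2 by auto
    qed
  qed
  have "F = (\<lambda>_. 0)" using F0 by auto
  then have "((\<lambda>_. 0) has_real_derivative 2 * (norm (z x))^2) (at x)" using dF[of x] by simp
  then have "2 * (norm (z x))^2 = 0" using DERIV_const DERIV_unique by blast
  then show ?thesis by simp
qed

lemma weak_dd_prim: "weak_dd f f1 f2 \<longleftrightarrow> (\<forall>x. (f has_vector_derivative f1 x) (at x)) \<and> prim f2 f1"
  by (simp add: weak_dd_def prim_def)

lemma weak_dd_lin:
  assumes "weak_dd f f1 f2" "weak_dd g g1 g2"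
  shows "weak_dd (\<lambda>x. a * f x + b * g x) (\<lambda>x. a * f1 x + b * g1 x) (\<lambda>x. a * f2 x + b * g2 x)"
  using assms unfolding weak_dd_prim
  by (auto intro!: has_vector_derivative_add has_vector_derivative_mult_right prim_add prim_cmult)

lemma H2_deriv_L2:
  assumes "H2 f" "weak_dd f f1 f2" shows "L2 f1"
proof -
  obtain g1 g2 where g: "weak_dd f g1 g2" "L2 g1" using assms(1) by (auto simp: H2_def)
  have "g1 x = f1 x" for x
    using g(1) assms(2) unfolding weak_dd_def by (metis vector_derivative_unique_at)
  then have "g1 = f1" by auto
  then show ?thesis using g(2) by simp
qed

lemma H2_L2: "H2 f \<Longrightarrow> L2 f" by (simp add: H2_def)

lemma L2_rk: "L2 (\<lambda>x. complex_of_real (rho x * kappa x))"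
proof (rule L2_bound[OF L2_kc, where B=1])
  show "(\<lambda>x. complex_of_real (rho x * kappa x)) \<in> borel_measurable lebesgue"
    by (intro cont_meas continuous_intros continuous_kappa continuous_rho)
  show "AE x in lebesgue. norm (complex_of_real (rho x * kappa x)) \<le> 1 * norm (kc x)"
  proof (rule AE_I2)
    fix x
    have "\<bar>rho x\<bar> * kappa x \<le> 1 * kappa x" by (intro mult_right_mono rho_bound) simp
    then show "norm (complex_of_real (rho x * kappa x)) \<le> 1 * norm (kc x)"
      by (simp add: kc_def abs_mult norm_mult)
  qed
qed

lemma weak_dd_kc: "weak_dd (\<lambda>x. c * kc x) (\<lambda>x. c * complex_of_real (kd x)) (\<lambda>x. c * complex_of_real (rho x * kappa x))"
proof -
  have dkc: "(kc has_vector_derivative complex_of_real (kd x)) (at x)" for x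
    unfolding kc_def[abs_def] by (rule has_vector_derivative_of_real[OF kappa_deriv])
  have dkd: "((\<lambda>x. complex_of_real (kd x)) has_vector_derivative complex_of_real (rho x * kappa x)) (at x)" for x
    by (rule has_vector_derivative_of_real[OF kd_deriv])
  show ?thesis unfolding weak_dd_prim
    by (intro conjI allI prim_FTC has_vector_derivative_mult_right dkc dkd)
qed

lemma H2_ckc: "H2 (\<lambda>x. c * kc x)"
  unfolding H2_def using weak_dd_kc[of c] L2_cmult[OF L2_kc] L2_cmult[OF L2_kd] L2_cmult[OF L2_rk] by blast

lemma ker_elem: "Ac_minus_i (\<lambda>x. c * kc x, \<lambda>x. - \<i> * c * kc x) zero_pair"
proof -
  have Uc: "(\<lambda>x. c * kc x, \<lambda>x. - \<i> * c * kc x) \<in> Uc"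
    using H2_ckc[of c] H2_ckc[of "- \<i> * c"] by (simp add: Uc_def)
  have Vc: "zero_pair \<in> Vc" by (simp add: Vc_def zero_pair_def L2_zero)
  show ?thesis unfolding Ac_minus_i_def
    apply (intro conjI Uc Vc)
    apply (rule exI[of _ "\<lambda>x. c * complex_of_real (kd x)"])
    apply (rule exI[of _ "\<lambda>x. c * complex_of_real (rho x * kappa x)"])
    apply (rule exI[of _ "\<lambda>x. - \<i> * c * complex_of_real (kd x)"])
    apply (rule exI[of _ "\<lambda>x. - \<i> * c * complex_of_real (rho x * kappa x)"])
    using weak_dd_kc[of c] weak_dd_kc[of "- \<i> * c"]
    by (auto simp: zero_pair_def kc_def algebra_simps intro!: AE_I2)
qed

lemma ker_char:
  assumes A: "Ac_minus_i u zero_pair"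
  shows "\<exists>c. u = (\<lambda>x. c * kc x, \<lambda>x. - \<i> * c * kc x)"
proof -
  obtain \<phi>1 \<phi>2 \<psi>1 \<psi>2 where U: "u \<in> Uc" and wdp: "weak_dd (fst u) \<phi>1 \<phi>2" and wdq: "weak_dd (snd u) \<psi>1 \<psi>2"
    and ae: "AE x in lebesgue.
           0 = \<phi>2 x - snd u x - complex_of_real (rho x) * fst u x - \<i> * fst u x \<and>
           0 = \<psi>2 x + fst u x - complex_of_real (rho x) * snd u x - \<i> * snd u x"
    using A unfolding Ac_minus_i_def zero_pair_def by auto
  define \<phi> where "\<phi> = fst u"
  define \<psi> where "\<psi> = snd u"
  have H: "H2 \<phi>" "H2 \<psi>" using U by (auto simp: Uc_def \<phi>_def \<psi>_def)
  have L: "L2 \<phi>" "L2 \<psi>" "L2 \<phi>1" "L2 \<psi>1"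
    using H H2_L2 H2_deriv_L2 wdp wdq by (auto simp: \<phi>_def \<psi>_def)
  have wdw: "weak_dd (\<lambda>x. 1 * \<phi> x + \<i> * \<psi> x) (\<lambda>x. 1 * \<phi>1 x + \<i> * \<psi>1 x) (\<lambda>x. 1 * \<phi>2 x + \<i> * \<psi>2 x)"
    using weak_dd_lin[OF wdp wdq, of 1 "\<i>"] by (simp add: \<phi>_def \<psi>_def)
  have wdz: "weak_dd (\<lambda>x. 1 * \<phi> x + - \<i> * \<psi> x) (\<lambda>x. 1 * \<phi>1 x + - \<i> * \<psi>1 x) (\<lambda>x. 1 * \<phi>2 x + - \<i> * \<psi>2 x)"
    using weak_dd_lin[OF wdp wdq, of 1 "- \<i>"] by (simp add: \<phi>_def \<psi>_def)
  define w where "w x = \<phi> x + \<i> * \<psi> x" for x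
  define w1 where "w1 x = \<phi>1 x + \<i> * \<psi>1 x" for x
  define z where "z x = \<phi> x - \<i> * \<psi> x" for x
  define z1 where "z1 x = \<phi>1 x - \<i> * \<psi>1 x" for x
  have wd: "\<And>x. (w has_vector_derivative w1 x) (at x)" "prim (\<lambda>x. \<phi>2 x + \<i> * \<psi>2 x) w1"
    using wdw unfolding weak_dd_prim w_def[abs_def] w1_def[abs_def] by auto
  have zd: "\<And>x. (z has_vector_derivative z1 x) (at x)" "prim (\<lambda>x. \<phi>2 x - \<i> * \<psi>2 x) z1"
    using wdz unfolding weak_dd_prim z_def[abs_def] z1_def[abs_def] by auto
  have aew: "AE x in lebesgue. \<phi>2 x + \<i> * \<psi>2 x = complex_of_real (rho x) * w x"
    using ae
  proof eventually_elim
    case (elim x)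
    have e1: "\<phi>2 x = \<psi> x + complex_of_real (rho x) * \<phi> x + \<i> * \<phi> x"
      using elim by (auto simp: \<phi>_def \<psi>_def algebra_simps)
    have e2: "\<psi>2 x = - \<phi> x + complex_of_real (rho x) * \<psi> x + \<i> * \<psi> x"
      using elim by (auto simp: \<phi>_def \<psi>_def algebra_simps)
    have "\<phi>2 x + \<i> * \<psi>2 x = (\<psi> x + complex_of_real (rho x) * \<phi> x + \<i> * \<phi> x) +
        \<i> * (- \<phi> x + complex_of_real (rho x) * \<psi> x + \<i> * \<psi> x)" by (simp only: e1 e2)
    also have "\<dots> = complex_of_real (rho x) * w x" by (simp add: w_def algebra_simps)
    finally show ?case .
  qed
  have aez: "AE x in lebesgue. \<phi>2 x - \<i> * \<psi>2 x = (complex_of_real (rho x) + 2 * \<i>) * z x"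
    using ae
  proof eventually_elim
    case (elim x)
    have e1: "\<phi>2 x = \<psi> x + complex_of_real (rho x) * \<phi> x + \<i> * \<phi> x"
      using elim by (auto simp: \<phi>_def \<psi>_def algebra_simps)
    have e2: "\<psi>2 x = - \<phi> x + complex_of_real (rho x) * \<psi> x + \<i> * \<psi> x"
      using elim by (auto simp: \<phi>_def \<psi>_def algebra_simps)
    have "\<phi>2 x - \<i> * \<psi>2 x = (\<psi> x + complex_of_real (rho x) * \<phi> x + \<i> * \<phi> x) -
        \<i> * (- \<phi> x + complex_of_real (rho x) * \<psi> x + \<i> * \<psi> x)" by (simp only: e1 e2)
    also have "\<dots> = (complex_of_real (rho x) + 2 * \<i>) * z x" by (simp add: z_def algebra_simps)
    finally show ?case .
  qed
  have wc: "continuous_on UNIV w" by (rule vd_continuous[OF wd(1)])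
  have zc: "continuous_on UNIV z" by (rule vd_continuous[OF zd(1)])
  have dw1: "(w1 has_vector_derivative complex_of_real (rho x) * w x) (at x)" for x
    by (rule prim_deriv[OF prim_ae_cong[OF wd(2) aew]]) (intro continuous_intros continuous_rho wc)
  have dz1: "(z1 has_vector_derivative (complex_of_real (rho x) + 2 * \<i>) * z x) (at x)" for x
    by (rule prim_deriv[OF prim_ae_cong[OF zd(2) aez]]) (intro continuous_intros continuous_rho zc)
  have Lw: "L2 w" "L2 w1" "L2 z" "L2 z1"
    unfolding w_def[abs_def] w1_def[abs_def] z_def[abs_def] z1_def[abs_def]
    using L by (auto intro!: L2_add L2_diff L2_cmult)
  obtain C where C: "\<And>x. w x = C * kc x" using kernel_w[OF Lw(1,2) wd(1) dw1] by blast
  have z0: "z x = 0" for x by (rule kernel_z[OF Lw(3,4) zd(1) dz1])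
  have "\<phi> x = C / 2 * kc x" for x using C[of x] z0[of x] by (simp add: w_def z_def field_simps)
  moreover have "\<psi> x = - \<i> * (C / 2) * kc x" for x
  proof -
    have "2 * \<i> * \<psi> x = w x - z x" by (simp add: w_def z_def)
    then have e: "2 * \<i> * \<psi> x = C * kc x" using C[of x] z0[of x] by simp
    have "\<psi> x = - \<i> * (2 * \<i> * \<psi> x) / 2" by (simp add: algebra_simps)
    also have "\<dots> = - \<i> * (C * kc x) / 2" by (simp only: e)
    also have "\<dots> = - \<i> * (C / 2) * kc x" by simp
    finally show ?thesis .
  qed
  ultimately have "u = (\<lambda>x. C / 2 * kc x, \<lambda>x. - \<i> * (C / 2) * kc x)"
    unfolding \<phi>_def \<psi>_def by (simp add: prod_eq_iff fun_eq_iff)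
  then show ?thesis by blast
qed

lemma tendsto_ind_right:
  fixes g :: "real \<Rightarrow> complex"
  assumes gi: "integrable lebesgue g"
  shows "((\<lambda>t. \<integral>y. indicator {0..t} y * g y \<partial>lebesgue) \<longlongrightarrow> (\<integral>y. indicator {0..} y * g y \<partial>lebesgue)) at_top"
proof (rule integral_dominated_convergence_at_top[where w="\<lambda>y. norm (g y)"])
  show "(\<lambda>y. indicator {0..} y * g y) \<in> borel_measurable lebesgue"
    using integrable_ind_mult[OF gi, of "{0..}"] by (intro borel_measurable_integrable) auto
  show "(\<lambda>y. indicator {0..t} y * g y) \<in> borel_measurable lebesgue" for t
    using integrable_ind_mult[OF gi, of "{0..t}"] by (intro borel_measurable_integrable) auto
  show "integrable lebesgue (\<lambda>y. norm (g y))" using gi by simp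
  show "AE y in lebesgue. ((\<lambda>t. indicator {0..t} y * g y) \<longlongrightarrow> indicator {0..} y * g y) at_top"
  proof (rule AE_I2)
    fix y :: real
    have "eventually (\<lambda>t. indicator {0..t} y * g y = indicator {0..} y * g y) at_top"
      using eventually_ge_at_top[of y] by eventually_elim (auto simp: indicator_def)
    then show "((\<lambda>t. indicator {0..t} y * g y) \<longlongrightarrow> indicator {0..} y * g y) at_top"
      by (rule tendsto_eventually)
  qed
  show "\<forall>\<^sub>F t in at_top. AE y in lebesgue. norm (indicator {0..t} y * g y) \<le> norm (g y)"
    by (auto simp: indicator_def norm_mult)
qed

lemma tendsto_ind_left:
  fixes g :: "real \<Rightarrow> complex"
  assumes gi: "integrable lebesgue g"
  shows "((\<lambda>t. \<integral>y. indicator {-t..0} y * g y \<partial>lebesgue) \<longlongrightarrow> (\<integral>y. indicator {..0} y * g y \<partial>lebesgue)) at_top"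
proof (rule integral_dominated_convergence_at_top[where w="\<lambda>y. norm (g y)"])
  show "(\<lambda>y. indicator {..0} y * g y) \<in> borel_measurable lebesgue"
    using integrable_ind_mult[OF gi, of "{..0}"] by (intro borel_measurable_integrable) auto
  show "(\<lambda>y. indicator {-t..0} y * g y) \<in> borel_measurable lebesgue" for t
    using integrable_ind_mult[OF gi, of "{-t..0}"] by (intro borel_measurable_integrable) auto
  show "integrable lebesgue (\<lambda>y. norm (g y))" using gi by simp
  show "AE y in lebesgue. ((\<lambda>t. indicator {-t..0} y * g y) \<longlongrightarrow> indicator {..0} y * g y) at_top"
  proof (rule AE_I2)
    fix y :: real
    have "eventually (\<lambda>t. indicator {-t..0} y * g y = indicator {..0} y * g y) at_top"
      using eventually_ge_at_top[of "-y"] by eventually_elim (auto simp: indicator_def)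
    then show "((\<lambda>t. indicator {-t..0} y * g y) \<longlongrightarrow> indicator {..0} y * g y) at_top"
      by (rule tendsto_eventually)
  qed
  show "\<forall>\<^sub>F t in at_top. AE y in lebesgue. norm (indicator {-t..0} y * g y) \<le> norm (g y)"
    by (auto simp: indicator_def norm_mult)
qed

lemma range_orth:
  assumes A: "Ac_minus_i u v"
  shows "(\<integral>x. kc x * (fst v x + \<i> * snd v x) \<partial>lebesgue) = 0"
proof -
  obtain \<phi>1 \<phi>2 \<psi>1 \<psi>2 where U: "u \<in> Uc" and V: "v \<in> Vc" and wdp: "weak_dd (fst u) \<phi>1 \<phi>2" and wdq: "weak_dd (snd u) \<psi>1 \<psi>2"
    and ae: "AE x in lebesgue.
           fst v x = \<phi>2 x - snd u x - complex_of_real (rho x) * fst u x - \<i> * fst u x \<and>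
           snd v x = \<psi>2 x + fst u x - complex_of_real (rho x) * snd u x - \<i> * snd u x"
    using A unfolding Ac_minus_i_def by auto
  define \<phi> where "\<phi> = fst u"
  define \<psi> where "\<psi> = snd u"
  have H: "H2 \<phi>" "H2 \<psi>" using U by (auto simp: Uc_def \<phi>_def \<psi>_def)
  have L: "L2 \<phi>" "L2 \<psi>" "L2 \<phi>1" "L2 \<psi>1"
    using H H2_L2 H2_deriv_L2 wdp wdq by (auto simp: \<phi>_def \<psi>_def)
  define h where "h x = fst v x + \<i> * snd v x" for x
  have hL: "L2 h" using V unfolding h_def[abs_def] Vc_def by (auto intro!: L2_add L2_cmult)
  have wdw: "weak_dd (\<lambda>x. 1 * \<phi> x + \<i> * \<psi> x) (\<lambda>x. 1 * \<phi>1 x + \<i> * \<psi>1 x) (\<lambda>x. 1 * \<phi>2 x + \<i> * \<psi>2 x)"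
    using weak_dd_lin[OF wdp wdq, of 1 "\<i>"] by (simp add: \<phi>_def \<psi>_def)
  define w where "w x = \<phi> x + \<i> * \<psi> x" for x
  define w1 where "w1 x = \<phi>1 x + \<i> * \<psi>1 x" for x
  have wd: "\<And>x. (w has_vector_derivative w1 x) (at x)" "prim (\<lambda>x. \<phi>2 x + \<i> * \<psi>2 x) w1"
    using wdw unfolding weak_dd_prim w_def[abs_def] w1_def[abs_def] by auto
  have aew: "AE x in lebesgue. \<phi>2 x + \<i> * \<psi>2 x = h x + complex_of_real (rho x) * w x"
    using ae
  proof eventually_elim
    case (elim x)
    have e1: "\<phi>2 x = fst v x + \<psi> x + complex_of_real (rho x) * \<phi> x + \<i> * \<phi> x"
      using elim by (simp add: \<phi>_def \<psi>_def)
    have e2: "\<psi>2 x = snd v x - \<phi> x + complex_of_real (rho x) * \<psi> x + \<i> * \<psi> x"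
      using elim by (simp add: \<phi>_def \<psi>_def)
    have "\<phi>2 x + \<i> * \<psi>2 x = (fst v x + \<psi> x + complex_of_real (rho x) * \<phi> x + \<i> * \<phi> x) +
       \<i> * (snd v x - \<phi> x + complex_of_real (rho x) * \<psi> x + \<i> * \<psi> x)" by (simp only: e1 e2)
    also have "\<dots> = h x + complex_of_real (rho x) * w x" by (simp add: h_def w_def algebra_simps)
    finally show ?case .
  qed
  have Lw: "L2 w" "L2 w1"
    unfolding w_def[abs_def] w1_def[abs_def] using L by (auto intro!: L2_add L2_cmult)
  have rhom: "(\<lambda>x. complex_of_real (rho x)) \<in> borel_measurable lebesgue"
    by (intro cont_meas continuous_intros continuous_rho)
  have fL: "L2 (\<lambda>x. h x + complex_of_real (rho x) * w x)"
    by (intro L2_add hL L2_mult_bounded[OF Lw(1) rhom, where B=1]) (simp add: rho_bound)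
  have primw: "prim (\<lambda>x. h x + complex_of_real (rho x) * w x) w1"
    by (rule prim_ae_cong[OF wd(2) aew])
  have dkc: "(kc has_vector_derivative complex_of_real (kd x)) (at x)" for x
    unfolding kc_def[abs_def] by (rule has_vector_derivative_of_real[OF kappa_deriv])
  have dkd: "((\<lambda>x. complex_of_real (kd x)) has_vector_derivative complex_of_real (rho x * kappa x)) (at x)" for x
    by (rule has_vector_derivative_of_real[OF kd_deriv])
  have kdc: "continuous_on UNIV (\<lambda>x. complex_of_real (kd x))"
    by (intro continuous_intros continuous_kd)
  have p1: "prim (\<lambda>x. complex_of_real (kd x) * w1 x + kc x * (h x + complex_of_real (rho x) * w x)) (\<lambda>x. kc x * w1 x)"
    by (rule prim_ibp[OF primw L2_set_integrable[OF fL] L2_measurable[OF fL] dkc kdc])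
  have p2: "prim (\<lambda>x. w x * complex_of_real (rho x * kappa x) + w1 x * complex_of_real (kd x)) (\<lambda>x. w x * complex_of_real (kd x))"
    by (rule prim_FTC) (rule has_vector_derivative_mult[OF wd(1) dkd])
  define Om where "Om x = kc x * w1 x - w x * complex_of_real (kd x)" for x
  define g where "g y = kc y * h y" for y
  have pOm: "prim g Om"
    unfolding Om_def[abs_def] g_def[abs_def]
    by (rule prim_cong[OF prim_diff[OF p1 p2]]) (simp_all add: kc_def algebra_simps)
  have gi: "integrable lebesgue g" unfolding g_def by (rule L2_prod_integrable[OF L2_kc hL])
  have Omi: "integrable lebesgue Om"
    unfolding Om_def by (intro Bochner_Integration.integrable_diff L2_prod_integrable L2_kc L2_kd Lw)
  have gsi: "set_integrable lebesgue S g" if "S \<in> sets lebesgue" for S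
    using integrable_ind_mult[OF gi that] by (simp add: set_integrable_complex)
  have right: "Om x = Om 0 + (\<integral>y. indicator {0..x} y * g y \<partial>lebesgue)" if "0 \<le> x" for x
  proof -
    have "(g has_integral (Om x - Om 0)) {0..x}" by (rule primD[OF pOm that])
    moreover have "(g has_integral (\<integral>y. indicator {0..x} y * g y \<partial>lebesgue)) {0..x}"
      by (rule has_integral_set_complex[OF gsi]) simp
    ultimately have "Om x - Om 0 = (\<integral>y. indicator {0..x} y * g y \<partial>lebesgue)" by (rule has_integral_unique)
    then show ?thesis by (simp add: algebra_simps)
  qed
  have left: "Om (- t) = Om 0 - (\<integral>y. indicator {-t..0} y * g y \<partial>lebesgue)" if "0 \<le> t" for t
  proof -
    have "(g has_integral (Om 0 - Om (- t))) {-t..0}" by (rule primD[OF pOm]) (use that in simp)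
    moreover have "(g has_integral (\<integral>y. indicator {-t..0} y * g y \<partial>lebesgue)) {-t..0}"
      by (rule has_integral_set_complex[OF gsi]) simp
    ultimately have "Om 0 - Om (- t) = (\<integral>y. indicator {-t..0} y * g y \<partial>lebesgue)" by (rule has_integral_unique)
    then show ?thesis by (simp add: algebra_simps)
  qed
  define Lp where "Lp = (\<integral>y. indicator {0..} y * g y \<partial>lebesgue)"
  define Lm where "Lm = (\<integral>y. indicator {..0} y * g y \<partial>lebesgue)"
  have "(Om \<longlongrightarrow> Om 0 + Lp) at_top"
  proof (rule Lim_transform_eventually)
    show "((\<lambda>x. Om 0 + (\<integral>y. indicator {0..x} y * g y \<partial>lebesgue)) \<longlongrightarrow> Om 0 + Lp) at_top"
      unfolding Lp_def by (intro tendsto_add tendsto_const tendsto_ind_right[OF gi])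
    show "\<forall>\<^sub>F x in at_top. Om 0 + (\<integral>y. indicator {0..x} y * g y \<partial>lebesgue) = Om x"
      using eventually_ge_at_top[of 0] by eventually_elim (metis right)
  qed
  then have e1: "Om 0 + Lp = 0" by (rule lim_integrable_zero_top[OF Omi])
  have "((\<lambda>t. Om (- t)) \<longlongrightarrow> Om 0 - Lm) at_top"
  proof (rule Lim_transform_eventually)
    show "((\<lambda>t. Om 0 - (\<integral>y. indicator {-t..0} y * g y \<partial>lebesgue)) \<longlongrightarrow> Om 0 - Lm) at_top"
      unfolding Lm_def by (intro tendsto_diff tendsto_const tendsto_ind_left[OF gi])
    show "\<forall>\<^sub>F t in at_top. Om 0 - (\<integral>y. indicator {-t..0} y * g y \<partial>lebesgue) = Om (- t)"
      using eventually_ge_at_top[of 0] by eventually_elim (metis left)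
  qed
  then have "((\<lambda>x. Om (- (- x))) \<longlongrightarrow> Om 0 - Lm) at_bot"
    by (rule filterlim_compose[OF _ filterlim_uminus_at_top_at_bot])
  then have "(Om \<longlongrightarrow> Om 0 - Lm) at_bot" by simp
  then have e2: "Om 0 - Lm = 0" by (rule lim_integrable_zero_bot[OF Omi])
  have "(\<integral>y. g y \<partial>lebesgue) = (\<integral>y. indicator {0..} y * g y + indicator {..0} y * g y \<partial>lebesgue)"
  proof (rule integral_cong_AE)
    show "g \<in> borel_measurable lebesgue" using gi by (rule borel_measurable_integrable)
    show "(\<lambda>y. indicator {0..} y * g y + indicator {..0} y * g y) \<in> borel_measurable lebesgue"
      using integrable_ind_mult[OF gi, of "{0..}"] integrable_ind_mult[OF gi, of "{..0}"]
      by (intro borel_measurable_integrable Bochner_Integration.integrable_add) auto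
    show "AE y in lebesgue. g y = indicator {0..} y * g y + indicator {..0} y * g y"
      using AE_leb_neq[of 0] by eventually_elim (auto simp: indicator_def)
  qed
  also have "\<dots> = Lp + Lm" unfolding Lp_def Lm_def
    by (intro Bochner_Integration.integral_add integrable_ind_mult[OF gi]) auto
  also have "\<dots> = 0" using e1 e2 by (simp add: algebra_simps eq_neg_iff_add_eq_0)
  finally show ?thesis unfolding g_def h_def .
qed

lemma range_surj:
  assumes v: "v \<in> Vc" and orth: "(\<integral>x. kc x * (fst v x + \<i> * snd v x) \<partial>lebesgue) = 0"
  shows "\<exists>u. Ac_minus_i u v"
proof -
  define f where "f = fst v"
  define g where "g = snd v"
  have Lf: "L2 f" "L2 g" using v by (auto simp: Vc_def f_def g_def)
  define h where "h x = f x + \<i> * g x" for x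
  define k where "k x = f x - \<i> * g x" for x
  have hL: "L2 h" unfolding h_def[abs_def] using Lf by (auto intro!: L2_add L2_cmult)
  have kL: "L2 k" unfolding k_def[abs_def] using Lf by (auto intro!: L2_diff L2_cmult)
  have orth': "(\<integral>x. kc x * h x \<partial>lebesgue) = 0" using orth by (simp add: h_def f_def g_def)
  obtain w w1 w2 where W: "L2 w" "L2 w1" "L2 w2" "weak_dd w w1 w2" "\<And>x. w2 x = complex_of_real (rho x) * w x + h x"
    using solve_L[OF hL orth'] by blast
  obtain z z1 z2 where Z: "L2 z" "L2 z1" "L2 z2" "weak_dd z z1 z2" "\<And>x. z2 x = (complex_of_real (rho x) + 2 * \<i>) * z x + k x"
    using solve_Z[OF kL] by blast
  define a where "a = (1/2 :: complex)"
  define b where "b = (- \<i> / 2 :: complex)"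
  define b' where "b' = (\<i> / 2 :: complex)"
  have wp: "weak_dd (\<lambda>x. a * w x + a * z x) (\<lambda>x. a * w1 x + a * z1 x) (\<lambda>x. a * w2 x + a * z2 x)"
    by (rule weak_dd_lin[OF W(4) Z(4)])
  have wq: "weak_dd (\<lambda>x. b * w x + b' * z x) (\<lambda>x. b * w1 x + b' * z1 x) (\<lambda>x. b * w2 x + b' * z2 x)"
    by (rule weak_dd_lin[OF W(4) Z(4)])
  have L2s: "L2 (\<lambda>x. c * p x + d * q x)" if "L2 p" "L2 q" for c d :: complex and p q
    by (intro L2_add L2_cmult that)
  have Hp: "H2 (\<lambda>x. a * w x + a * z x)"
    unfolding H2_def using wp W Z L2s by blast
  have Hq: "H2 (\<lambda>x. b * w x + b' * z x)"
    unfolding H2_def using wq W Z L2s by blast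
  have eqs: "f x = (a * w2 x + a * z2 x) - (b * w x + b' * z x) - complex_of_real (rho x) * (a * w x + a * z x) - \<i> * (a * w x + a * z x) \<and>
     g x = (b * w2 x + b' * z2 x) + (a * w x + a * z x) - complex_of_real (rho x) * (b * w x + b' * z x) - \<i> * (b * w x + b' * z x)" for x
  proof -
    have "(a * w2 x + a * z2 x) - (b * w x + b' * z x) - complex_of_real (rho x) * (a * w x + a * z x) - \<i> * (a * w x + a * z x)
       = (h x + k x) / 2"
      unfolding W(5) Z(5) a_def b_def b'_def by (simp add: field_simps)
    moreover have "(b * w2 x + b' * z2 x) + (a * w x + a * z x) - complex_of_real (rho x) * (b * w x + b' * z x) - \<i> * (b * w x + b' * z x)
       = - \<i> * (h x - k x) / 2"
      unfolding W(5) Z(5) a_def b_def b'_def by (simp add: field_simps)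
    moreover have "(h x + k x) / 2 = f x" "- \<i> * (h x - k x) / 2 = g x"
      by (simp_all add: h_def k_def field_simps)
    ultimately show ?thesis by simp
  qed
  have "Ac_minus_i (\<lambda>x. a * w x + a * z x, \<lambda>x. b * w x + b' * z x) v"
    unfolding Ac_minus_i_def
    apply (intro conjI)
    using Hp Hq apply (simp add: Uc_def)
    using v apply simp
    apply (rule exI[of _ "\<lambda>x. a * w1 x + a * z1 x"])
    apply (rule exI[of _ "\<lambda>x. a * w2 x + a * z2 x"])
    apply (rule exI[of _ "\<lambda>x. b * w1 x + b' * z1 x"])
    apply (rule exI[of _ "\<lambda>x. b * w2 x + b' * z2 x"])
    using wp wq eqs by (auto simp: f_def g_def intro!: AE_I2)
  then show ?thesis by blast
qed

lemma CS_L2: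
  fixes a b :: "real \<Rightarrow> complex"
  assumes a: "L2 a" and b: "L2 b"
  shows "(norm (\<integral>x. a x * b x \<partial>lebesgue))^2 \<le> (\<integral>x. (norm (a x))^2 \<partial>lebesgue) * (\<integral>x. (norm (b x))^2 \<partial>lebesgue)"
proof -
  have [measurable]: "a \<in> borel_measurable lebesgue" "b \<in> borel_measurable lebesgue" using a b by (auto simp: L2_def)
  define P where "P = (\<integral>x. norm (a x) * norm (b x) \<partial>lebesgue)"
  define A where "A = (\<integral>x. (norm (a x))^2 \<partial>lebesgue)"
  define B where "B = (\<integral>x. (norm (b x))^2 \<partial>lebesgue)"
  have abi: "integrable lebesgue (\<lambda>x. norm (a x) * norm (b x))"
    using integrable_norm[OF L2_prod_integrable[OF a b]] by (simp add: norm_mult)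
  have n1: "norm (\<integral>x. a x * b x \<partial>lebesgue) \<le> P"
    unfolding P_def using integral_norm_bound[of lebesgue "\<lambda>x. a x * b x"] by (simp add: norm_mult)
  have eP: "ennreal P = (\<integral>\<^sup>+x. ennreal (norm (a x)) * ennreal (norm (b x)) \<partial>lebesgue)"
    unfolding P_def by (subst nn_integral_eq_integral[symmetric]) (auto simp: abi ennreal_mult)
  have eA: "ennreal A = (\<integral>\<^sup>+x. (ennreal (norm (a x)))^2 \<partial>lebesgue)"
    unfolding A_def by (subst nn_integral_eq_integral[symmetric]) (auto simp: L2_integrable[OF a] ennreal_power)
  have eB: "ennreal B = (\<integral>\<^sup>+x. (ennreal (norm (b x)))^2 \<partial>lebesgue)"
    unfolding B_def by (subst nn_integral_eq_integral[symmetric]) (auto simp: L2_integrable[OF b] ennreal_power)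
  have "(ennreal P)^2 \<le> ennreal A * ennreal B"
    unfolding eP eA eB by (rule Cauchy_Schwarz_nn_integral) measurable
  moreover have "0 \<le> P" "0 \<le> A" "0 \<le> B" unfolding P_def A_def B_def by auto
  ultimately have "P^2 \<le> A * B"
    by (simp add: ennreal_power ennreal_mult[symmetric] ennreal_le_iff)
  moreover have "(norm (\<integral>x. a x * b x \<partial>lebesgue))^2 \<le> P^2"
    using n1 by (intro power_mono) auto
  ultimately show ?thesis unfolding A_def B_def by linarith
qed

definition Lam :: "cpair \<Rightarrow> complex" where
  "Lam v = (\<integral>x. kc x * (fst v x + \<i> * snd v x) \<partial>lebesgue)"

lemma range_char: "v \<in> op_range Ac_minus_i \<longleftrightarrow> v \<in> Vc \<and> Lam v = 0"
proof
  assume "v \<in> op_range Ac_minus_i"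
  then obtain u where "Ac_minus_i u v" by (auto simp: op_range_def)
  then show "v \<in> Vc \<and> Lam v = 0"
    using range_orth[of u v] by (auto simp: Ac_minus_i_def Lam_def)
next
  assume "v \<in> Vc \<and> Lam v = 0"
  then show "v \<in> op_range Ac_minus_i"
    using range_surj[of v] by (auto simp: op_range_def Lam_def)
qed

lemma kernel_eq: "op_kernel Ac_minus_i =
  {(\<lambda>x. c * complex_of_real (kappa x), \<lambda>x. - \<i> * c * complex_of_real (kappa x)) | c. True}"
proof
  show "op_kernel Ac_minus_i \<subseteq> {(\<lambda>x. c * complex_of_real (kappa x), \<lambda>x. - \<i> * c * complex_of_real (kappa x)) | c. True}"
    using ker_char by (auto simp: op_kernel_def kc_def)
  show "{(\<lambda>x. c * complex_of_real (kappa x), \<lambda>x. - \<i> * c * complex_of_real (kappa x)) | c. True} \<subseteq> op_kernel Ac_minus_i"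
    using ker_elem by (auto simp: op_kernel_def kc_def)
qed

definition NN :: complex where "NN = (\<integral>x. kc x * kc x \<partial>lebesgue)"

lemma NN_nz: "NN \<noteq> 0"
proof
  assume N0: "NN = 0"
  have i: "integrable lebesgue (\<lambda>x. kappa x * kappa x)"
    using L2_integrable[OF L2_kc] by (simp add: kc_def power2_eq_square)
  have "NN = complex_of_real (\<integral>x. kappa x * kappa x \<partial>lebesgue)"
    unfolding NN_def kc_def by (simp flip: of_real_mult)
  with N0 have "(\<integral>x. kappa x * kappa x \<partial>lebesgue) = 0" by simp
  then have ae: "AE x in lebesgue. kappa x * kappa x = 0"
    using integral_nonneg_eq_0_iff_AE[OF i] by simp
  obtain N where N: "\<And>x. x \<in> space lebesgue - N \<Longrightarrow> kappa x * kappa x = 0" "N \<in> null_sets lebesgue"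
    using AE_E3[OF ae] by blast
  have "UNIV \<subseteq> N"
  proof
    fix x :: real
    show "x \<in> N" using N(1)[of x] kappa_pos[of x] by auto
  qed
  then have "N = UNIV" by auto
  then show False using N(2) by (auto simp: null_sets_def)
qed

lemma Lam_lin:
  assumes "v \<in> Vc" "v' \<in> Vc"
  shows "Lam v - Lam v' = (\<integral>x. kc x * ((fst v x - fst v' x) + \<i> * (snd v x - snd v' x)) \<partial>lebesgue)"
proof -
  have L: "L2 (fst v)" "L2 (snd v)" "L2 (fst v')" "L2 (snd v')" using assms by (auto simp: Vc_def)
  have i1: "integrable lebesgue (\<lambda>x. kc x * (fst v x + \<i> * snd v x))"
    using L by (intro L2_prod_integrable L2_kc L2_add L2_cmult)
  have i2: "integrable lebesgue (\<lambda>x. kc x * (fst v' x + \<i> * snd v' x))"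
    using L by (intro L2_prod_integrable L2_kc L2_add L2_cmult)
  have "Lam v - Lam v' = (\<integral>x. kc x * (fst v x + \<i> * snd v x) - kc x * (fst v' x + \<i> * snd v' x) \<partial>lebesgue)"
    unfolding Lam_def using i1 i2 by simp
  also have "\<dots> = (\<integral>x. kc x * ((fst v x - fst v' x) + \<i> * (snd v x - snd v' x)) \<partial>lebesgue)"
    by (simp add: algebra_simps)
  finally show ?thesis .
qed

lemma closed_range: "L2_closed (op_range Ac_minus_i) Vc"
  unfolding L2_closed_def
proof (intro ballI allI impI)
  fix v s assume v: "v \<in> Vc" and s: "(\<forall>n. s n \<in> op_range Ac_minus_i) \<and> (\<lambda>n. l2dist2 (s n) v) \<longlonglongrightarrow> 0"
  have sV: "s n \<in> Vc" "Lam (s n) = 0" for n using s range_char by auto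
  define K where "K = (\<integral>x. (norm (kc x))^2 \<partial>lebesgue)"
  have bnd: "(norm (Lam v))^2 \<le> K * (2 * l2dist2 (s n) v)" for n
  proof -
    define d where "d x = (fst (s n) x - fst v x) + \<i> * (snd (s n) x - snd v x)" for x
    have L: "L2 (fst v)" "L2 (snd v)" "L2 (fst (s n))" "L2 (snd (s n))" using v sV(1)[of n] by (auto simp: Vc_def)
    have dL: "L2 d" unfolding d_def[abs_def] using L by (intro L2_add L2_diff L2_cmult)
    have "Lam (s n) - Lam v = (\<integral>x. kc x * d x \<partial>lebesgue)" unfolding d_def by (rule Lam_lin[OF sV(1) v])
    then have "- Lam v = (\<integral>x. kc x * d x \<partial>lebesgue)" using sV(2)[of n] by simp
    then have "norm (Lam v) = norm (\<integral>x. kc x * d x \<partial>lebesgue)" by (metis norm_minus_cancel)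
    then have "(norm (Lam v))^2 \<le> K * (\<integral>x. (norm (d x))^2 \<partial>lebesgue)"
      unfolding K_def using CS_L2[OF L2_kc dL] by simp
    also have "(\<integral>x. (norm (d x))^2 \<partial>lebesgue) \<le> 2 * l2dist2 (s n) v"
    proof -
      have "(\<integral>x. (norm (d x))^2 \<partial>lebesgue) \<le>
          (\<integral>x. 2 * ((norm (fst (s n) x - fst v x))^2 + (norm (snd (s n) x - snd v x))^2) \<partial>lebesgue)"
      proof (rule integral_mono)
        show "integrable lebesgue (\<lambda>x. (norm (d x))^2)" using dL by (simp add: L2_def)
        have "L2 (\<lambda>x. fst (s n) x - fst v x)" "L2 (\<lambda>x. snd (s n) x - snd v x)" using L by (auto intro: L2_diff)
        then show "integrable lebesgue (\<lambda>x. 2 * ((norm (fst (s n) x - fst v x))^2 + (norm (snd (s n) x - snd v x))^2))"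
          by (auto simp: L2_def)
        fix x
        have "(norm (d x))^2 \<le> (norm (fst (s n) x - fst v x) + norm (snd (s n) x - snd v x))^2"
          unfolding d_def by (intro power_mono) (auto intro: order_trans[OF norm_triangle_ineq] simp: norm_mult)
        also have "\<dots> \<le> 2 * ((norm (fst (s n) x - fst v x))^2 + (norm (snd (s n) x - snd v x))^2)"
          using two_ab_le[of "norm (fst (s n) x - fst v x)" "norm (snd (s n) x - snd v x)"] by (simp add: power2_sum)
        finally show "(norm (d x))^2 \<le> 2 * ((norm (fst (s n) x - fst v x))^2 + (norm (snd (s n) x - snd v x))^2)" .
      qed
      also have "\<dots> = 2 * l2dist2 (s n) v" by (simp only: l2dist2_def integral_mult_right_zero)
      finally show ?thesis .
    qed
    then have "K * (\<integral>x. (norm (d x))^2 \<partial>lebesgue) \<le> K * (2 * l2dist2 (s n) v)"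
      by (intro mult_left_mono) (auto simp: K_def)
    finally show ?thesis .
  qed
  have "(\<lambda>n. K * (2 * l2dist2 (s n) v)) \<longlonglongrightarrow> K * (2 * 0)"
    using s by (intro tendsto_mult tendsto_const) auto
  then have "(norm (Lam v))^2 \<le> K * (2 * 0)"
    by (rule LIMSEQ_le_const) (use bnd in auto)
  then have "Lam v = 0" by simp
  then show "v \<in> op_range Ac_minus_i" using v range_char by auto
qed

lemma kernel_dim: "has_dim (op_kernel Ac_minus_i) 1"
  unfolding has_dim_def
proof (intro exI[of _ "\<lambda>j. (kc, \<lambda>x. - \<i> * kc x)"] conjI allI impI ballI)
  fix j :: nat assume "j < 1"
  show "(kc, \<lambda>x. - \<i> * kc x) \<in> op_kernel Ac_minus_i"
    using ker_elem[of 1] by (simp add: op_kernel_def)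
next
  fix u assume "u \<in> op_kernel Ac_minus_i"
  then have "Ac_minus_i u zero_pair" by (simp add: op_kernel_def)
  then obtain c where u: "u = (\<lambda>x. c * kc x, \<lambda>x. - \<i> * c * kc x)"
    using ker_char by blast
  show "\<exists>c. u = lincomb c (\<lambda>j. (kc, \<lambda>x. - \<i> * kc x)) 1"
    by (rule exI[of _ "\<lambda>_. c"]) (simp add: u lincomb_def mult_ac)
next
  fix c :: "nat \<Rightarrow> complex" and j :: nat
  assume "lincomb c (\<lambda>j. (kc, \<lambda>x. - \<i> * kc x)) 1 = zero_pair" "j < 1"
  then have "c 0 * kc 0 = 0" by (auto simp: lincomb_def zero_pair_def fun_eq_iff)
  then show "c j = 0" using kc_nz[of 0] \<open>j < 1\<close> by simp
qed

lemma range_codim: "has_codim (op_range Ac_minus_i) Vc 1"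
  unfolding has_codim_def
proof (intro exI[of _ "\<lambda>j. (kc, \<lambda>x. 0)"] conjI allI impI ballI)
  fix j :: nat assume "j < 1"
  show "(kc, \<lambda>x. 0) \<in> Vc" by (simp add: Vc_def L2_kc L2_zero)
next
  fix v assume v: "v \<in> Vc"
  define c0 where "c0 = Lam v / NN"
  define r where "r = (\<lambda>x. fst v x - c0 * kc x, snd v)"
  have rV: "r \<in> Vc" using v by (auto simp: r_def Vc_def intro!: L2_diff L2_cmult L2_kc)
  have e0: "(kc, \<lambda>x. 0) \<in> Vc" by (simp add: Vc_def L2_kc L2_zero)
  have "Lam v - Lam r = (\<integral>x. kc x * ((fst v x - fst r x) + \<i> * (snd v x - snd r x)) \<partial>lebesgue)"
    by (rule Lam_lin[OF v rV])
  also have "\<dots> = c0 * NN" by (simp add: r_def NN_def mult_ac)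
  finally have "Lam r = 0" using NN_nz by (simp add: c0_def)
  then have "r \<in> op_range Ac_minus_i" using rV range_char by auto
  then show "\<exists>c. \<exists>r\<in>op_range Ac_minus_i. AE x in lebesgue.
      fst v x = fst r x + fst (lincomb c (\<lambda>j. (kc, \<lambda>x. 0)) 1) x \<and>
      snd v x = snd r x + snd (lincomb c (\<lambda>j. (kc, \<lambda>x. 0)) 1) x"
    by (intro exI[of _ "\<lambda>_. c0"] bexI[of _ r]) (auto simp: r_def lincomb_def intro!: AE_I2)
next
  fix c :: "nat \<Rightarrow> complex" and j :: nat
  assume A: "lincomb c (\<lambda>j. (kc, \<lambda>x. 0)) 1 \<in> op_range Ac_minus_i" "j < 1"
  have "Lam (lincomb c (\<lambda>j. (kc, \<lambda>x. 0)) 1) = 0" using A(1) range_char by auto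
  moreover have "Lam (lincomb c (\<lambda>j. (kc, \<lambda>x. 0)) 1) = c 0 * NN"
  proof -
    have "Lam (lincomb c (\<lambda>j. (kc, \<lambda>x. 0)) 1) = (\<integral>x. c 0 * (kc x * kc x) \<partial>lebesgue)"
      by (simp add: Lam_def lincomb_def mult_ac)
    also have "\<dots> = c 0 * NN" unfolding NN_def by (rule integral_mult_right_zero)
    finally show ?thesis .
  qed
  ultimately show "c j = 0" using NN_nz A(2) by simp
qed

theorem lemma5p2:
  shows "(fredholm Ac_minus_i Uc Vc \<and> fredholm_index Ac_minus_i Vc 0) \<and>
         op_kernel Ac_minus_i =
           {(\<lambda>x. c * complex_of_real (kappa x), \<lambda>x. - \<i> * c * complex_of_real (kappa x)) | c. True}"
proof (intro conjI)
  show "fredholm Ac_minus_i Uc Vc"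
    unfolding fredholm_def using kernel_dim closed_range range_codim by (auto simp: Ac_minus_i_def)
  show "fredholm_index Ac_minus_i Vc 0"
    unfolding fredholm_index_def using kernel_dim range_codim by force
  show "op_kernel Ac_minus_i =
           {(\<lambda>x. c * complex_of_real (kappa x), \<lambda>x. - \<i> * c * complex_of_real (kappa x)) | c. True}"
    by (rule kernel_eq)
qed

end
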